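(* Let $\mathfrak{R}=(G,G',S,\phi,\rho,\delta)$ be a reconciliation and $x\in V(G)$. If $x\in\Sigma(\mathfrak{R})$, then $x\in\Sigma(\mathfrak{R}_{lca})$ and $\rho(x)=\rho_{lca}(x)$.
   Context: All trees are rooted binary trees whose root node has degree 1; every other non-leaf node $x$ has exactly two children $x_l,x_r$. For nodes of a rooted tree, $y\le x$ means $x$ lies on the path from $y$ to the root. $G$ is a gene tree, $S$ a species tree, $\phi:L(G)\to L(S)$, with the standing assumption that the last common ancestor in $S$ of $\phi(L(G))$ is the unique child of $root(S)$. A tree $G'$ is an extension of $G$ if $G$ is obtained from $G'$ by pruning some subtrees and suppressing degree-2 nodes; $V(G)\subseteq V(G')$. A map $\rho:V(G')\to V(S)$ is consistent with $S$ if $\rho(root(G'))=root(S)$ and every node $x$ of $G'$ with two children satisfies (D) $\rho(x)=\rho(x_l)=\rho(x_r)$ or (S) $\rho(x)_l=\rho(x_l)$ and $\rho(x)_r=\rho(x_r)$. A DL reconciliation is $(G,G',S,\phi,\rho)$ with $G'$ an extension of $G$, $\rho$ consistent, $\rho|_{L(G)}=\phi$. A reconciliation additionally has an injective partial function $\delta$ from duplications to losses ($L(G')\setminus L(G)$) with $\rho(x)=\rho(\delta(x))$. Duplications $\Delta$ are nodes with two children satisfying (D); speciations $\Sigma$ those satisfying (S). For $x\in V(G)$, $\rho_{lca}(x)$ is the last common ancestor in $S$ of $\{\phi(l): l\in L(G), l\le x\}$; the LCA reconciliation $\mathfrak{R}_{lca}$ is the DL reconciliation (with empty $\delta$) whose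 map agrees with $\rho_{lca}$ on $V(G)$ and which has the minimum number of losses among such DL reconciliations. *)

theory Defs
  imports Main
begin

text \<open>A rooted tree is represented by its root and a partial parent map.
  The node set is the root together with the domain of the parent map.\<close>

type_synonym 'a tree = "'a \<times> ('a \<rightharpoonup> 'a)"

definition troot :: "'a tree \<Rightarrow> 'a" where
  "troot T = fst T"

definition tpar :: "'a tree \<Rightarrow> 'a \<rightharpoonup> 'a" where
  "tpar T = snd T"

definition tV :: "'a tree \<Rightarrow> 'a set" where
  "tV T = insert (troot T) (dom (tpar T))"

definition children :: "'a tree \<Rightarrow> 'a \<Rightarrow> 'a set" where
  "children T x = {y. tpar T y = Some x}"

text \<open>tleq T y x  means  y \<le> x, i.e. x lies on the path from y to the root.\<close>
definition tleq :: "'a tree \<Rightarrow> 'a \<Rightarrow> 'a \<Rightarrow> bool" where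
  "tleq T y x \<longleftrightarrow> (y, x) \<in> {(a, b). tpar T a = Some b}\<^sup>*"

definition leaves :: "'a tree \<Rightarrow> 'a set" where
  "leaves T = {x \<in> tV T. children T x = {}}"

definition is_tree :: "'a tree \<Rightarrow> bool" where
  "is_tree T \<longleftrightarrow>
     finite (dom (tpar T)) \<and> troot T \<notin> dom (tpar T) \<and> ran (tpar T) \<subseteq> tV T \<and>
     (\<forall>x\<in>tV T. tleq T x (troot T)) \<and>
     card (children T (troot T)) = 1 \<and>
     (\<forall>x\<in>tV T - {troot T}. card (children T x) = 0 \<or> card (children T x) = 2)"

definition lca :: "'a tree \<Rightarrow> 'a set \<Rightarrow> 'a" where
  "lca T A = (THE x. x \<in> tV T \<and> (\<forall>a\<in>A. tleq T a x) \<and>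
                 (\<forall>y\<in>tV T. (\<forall>a\<in>A. tleq T a y) \<longrightarrow> tleq T x y))"

definition prune_step :: "'a tree \<Rightarrow> 'a tree \<Rightarrow> bool" where
  "prune_step T T' \<longleftrightarrow> (\<exists>v\<in>tV T. v \<noteq> troot T \<and>
      T' = (troot T, \<lambda>y. if tleq T y v then None else tpar T y))"

definition suppress_step :: "'a tree \<Rightarrow> 'a tree \<Rightarrow> bool" where
  "suppress_step T T' \<longleftrightarrow> (\<exists>u\<in>tV T. u \<noteq> troot T \<and> (\<exists>w. children T u = {w}) \<and>
      T' = (troot T, (\<lambda>y. if tpar T y = Some u then tpar T u else tpar T y)(u := None)))"

definition ext_step :: "'a tree \<Rightarrow> 'a tree \<Rightarrow> bool" where
  "ext_step T T' \<longleftrightarrow> prune_step T T' \<or> suppress_step T T'"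

text \<open>G' is an extension of G: G is obtained from G' by pruning subtrees and suppressing
  degree-2 nodes (node names are preserved, so V(G) \<subseteq> V(G')).\<close>
definition is_extension :: "'a tree \<Rightarrow> 'a tree \<Rightarrow> bool" where
  "is_extension G' G \<longleftrightarrow> is_tree G' \<and> is_tree G \<and> ext_step\<^sup>*\<^sup>* G' G"

definition is_dup :: "'a tree \<Rightarrow> 'b tree \<Rightarrow> ('a \<Rightarrow> 'b) \<Rightarrow> 'a \<Rightarrow> bool" where
  "is_dup T S \<rho> x \<longleftrightarrow> card (children T x) = 2 \<and> (\<forall>y\<in>children T x. \<rho> y = \<rho> x)"

definition is_spec :: "'a tree \<Rightarrow> 'b tree \<Rightarrow> ('a \<Rightarrow> 'b) \<Rightarrow> 'a \<Rightarrow> bool" where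
  "is_spec T S \<rho> x \<longleftrightarrow> card (children T x) = 2 \<and> card (children S (\<rho> x)) = 2 \<and>
      \<rho> ` children T x = children S (\<rho> x)"

definition consistent :: "'a tree \<Rightarrow> 'b tree \<Rightarrow> ('a \<Rightarrow> 'b) \<Rightarrow> bool" where
  "consistent G' S \<rho> \<longleftrightarrow> \<rho> (troot G') = troot S \<and> (\<forall>x\<in>tV G'. \<rho> x \<in> tV S) \<and>
     (\<forall>x\<in>tV G'. card (children G' x) = 2 \<longrightarrow> is_dup G' S \<rho> x \<or> is_spec G' S \<rho> x)"

definition Delta :: "'a tree \<Rightarrow> 'b tree \<Rightarrow> ('a \<Rightarrow> 'b) \<Rightarrow> 'a set" where
  "Delta G' S \<rho> = {x \<in> tV G'. is_dup G' S \<rho> x}"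

definition Sigma :: "'a tree \<Rightarrow> 'b tree \<Rightarrow> ('a \<Rightarrow> 'b) \<Rightarrow> 'a set" where
  "Sigma G' S \<rho> = {x \<in> tV G'. is_spec G' S \<rho> x}"

definition losses :: "'a tree \<Rightarrow> 'a tree \<Rightarrow> 'a set" where
  "losses G G' = leaves G' - leaves G"

definition dl_reconciliation ::
  "'a tree \<Rightarrow> 'a tree \<Rightarrow> 'b tree \<Rightarrow> ('a \<Rightarrow> 'b) \<Rightarrow> ('a \<Rightarrow> 'b) \<Rightarrow> bool" where
  "dl_reconciliation G G' S \<phi> \<rho> \<longleftrightarrow> is_tree S \<and> is_extension G' G \<and> consistent G' S \<rho> \<and>
     (\<forall>l\<in>leaves G. \<rho> l = \<phi> l)"

definition reconciliation ::
  "'a tree \<Rightarrow> 'a tree \<Rightarrow> 'b tree \<Rightarrow> ('a \<Rightarrow> 'b) \<Rightarrow> ('a \<Rightarrow> 'b) \<Rightarrow> ('a \<rightharpoonup> 'a) \<Rightarrow> bool" where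
  "reconciliation G G' S \<phi> \<rho> \<delta> \<longleftrightarrow> dl_reconciliation G G' S \<phi> \<rho> \<and>
     dom \<delta> \<subseteq> Delta G' S \<rho> \<and> ran \<delta> \<subseteq> losses G G' \<and> inj_on \<delta> (dom \<delta>) \<and>
     (\<forall>x\<in>dom \<delta>. \<rho> (the (\<delta> x)) = \<rho> x)"

definition rho_lca :: "'a tree \<Rightarrow> 'b tree \<Rightarrow> ('a \<Rightarrow> 'b) \<Rightarrow> 'a \<Rightarrow> 'b" where
  "rho_lca G S \<phi> x = lca S (\<phi> ` {l \<in> leaves G. tleq G l x})"

definition lca_reconciliation ::
  "'a tree \<Rightarrow> 'a tree \<Rightarrow> 'b tree \<Rightarrow> ('a \<Rightarrow> 'b) \<Rightarrow> ('a \<Rightarrow> 'b) \<Rightarrow> bool" where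
  "lca_reconciliation G G' S \<phi> \<rho> \<longleftrightarrow>
     dl_reconciliation G G' S \<phi> \<rho> \<and> (\<forall>x\<in>tV G. \<rho> x = rho_lca G S \<phi> x) \<and>
     (\<forall>G2 \<rho>2. dl_reconciliation G G2 S \<phi> \<rho>2 \<and> (\<forall>x\<in>tV G. \<rho>2 x = rho_lca G S \<phi> x) \<longrightarrow>
        card (losses G G') \<le> card (losses G G2))"

definition standing :: "'a tree \<Rightarrow> 'b tree \<Rightarrow> ('a \<Rightarrow> 'b) \<Rightarrow> bool" where
  "standing G S \<phi> \<longleftrightarrow> \<phi> ` leaves G \<subseteq> leaves S \<and>
     lca S (\<phi> ` leaves G) \<in> children S (troot S)"

end

theory Submission
  imports Defs
begin


definition rel :: "'a tree \<Rightarrow> ('a \<times> 'a) set" where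
  "rel T = {(a, b). tpar T a = Some b}"

lemma tleq_rel: "tleq T y x \<longleftrightarrow> (y, x) \<in> (rel T)\<^sup>*"
  by (simp add: tleq_def rel_def)

lemma sv_rel: "single_valued (rel T)"
  by (auto simp: single_valued_def rel_def)

lemma rel_iff[simp]: "(a, b) \<in> rel T \<longleftrightarrow> tpar T a = Some b"
  by (simp add: rel_def)

definition wtree :: "'a tree \<Rightarrow> bool" where
  "wtree T \<longleftrightarrow> finite (dom (tpar T)) \<and> troot T \<notin> dom (tpar T) \<and> ran (tpar T) \<subseteq> tV T \<and>
     (\<forall>x\<in>tV T. tleq T x (troot T))"

lemma is_tree_wtree: "is_tree T \<Longrightarrow> wtree T"
  by (simp add: is_tree_def wtree_def)

lemma wtree_root: "wtree T \<Longrightarrow> tpar T (troot T) = None"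
  unfolding wtree_def by blast

lemma wtree_reach: "wtree T \<Longrightarrow> x \<in> tV T \<Longrightarrow> tleq T x (troot T)"
  unfolding wtree_def by blast

lemma wtree_ran: "wtree T \<Longrightarrow> tpar T c = Some y \<Longrightarrow> y \<in> tV T"
  unfolding wtree_def ran_def by blast

lemma wtree_fin: "wtree T \<Longrightarrow> finite (dom (tpar T))"
  unfolding wtree_def by blast

lemma troot_pair[simp]: "troot (r, p) = r" by (simp add: troot_def)
lemma tpar_pair[simp]: "tpar (r, p) = p" by (simp add: tpar_def)

lemma tleq_refl[simp]: "tleq T x x"
  by (simp add: tleq_rel)

lemma tleq_trans: "tleq T x y \<Longrightarrow> tleq T y z \<Longrightarrow> tleq T x z"
  unfolding tleq_rel by (rule rtrancl_trans)

lemma tleq_step: "tpar T x = Some y \<Longrightarrow> tleq T x y"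
  unfolding tleq_rel by (rule r_into_rtrancl) simp

lemma tleq_cases: "tleq T y x \<Longrightarrow> y \<noteq> x \<Longrightarrow> \<exists>p. tpar T y = Some p \<and> tleq T p x"
  unfolding tleq_rel by (erule converse_rtranclE) auto

lemma tleq_cases2: "tleq T y x \<Longrightarrow> y \<noteq> x \<Longrightarrow> \<exists>c. tpar T c = Some x \<and> tleq T y c"
  unfolding tleq_rel by (erule rtranclE) auto

lemma tleq_chain: "tleq T y a \<Longrightarrow> tleq T y b \<Longrightarrow> tleq T a b \<or> tleq T b a"
  unfolding tleq_rel by (rule single_valued_confluent[OF sv_rel])

lemma tleq_par: "tleq T y x \<Longrightarrow> y \<noteq> x \<Longrightarrow> tpar T y = Some p \<Longrightarrow> tleq T p x"
proof -
  assume a: "tleq T y x" "y \<noteq> x" "tpar T y = Some p"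
  obtain p' where "tpar T y = Some p'" "tleq T p' x" using tleq_cases[OF a(1,2)] by blast
  then show ?thesis using a(3) by simp
qed

lemma sv_cycle:
  assumes sv: "single_valued R" and cyc: "(u, u) \<in> R\<^sup>+" and ur: "(u, r) \<in> R\<^sup>*"
  shows "\<exists>r'. (r, r') \<in> R"
proof -
  have "(r, u) \<in> R\<^sup>*" using ur
  proof (induction rule: rtrancl_induct)
    case base then show ?case by simp
  next
    case (step w w')
    show ?case
    proof (cases "w = u")
      case True
      from cyc obtain u1 where "(u, u1) \<in> R" "(u1, u) \<in> R\<^sup>*"
        using tranclD by metis
      then show ?thesis using step True single_valuedD[OF sv] by metis
    next
      case False
      then obtain w1 where "(w, w1) \<in> R" "(w1, u) \<in> R\<^sup>*"
        using step.IH by (auto elim: converse_rtranclE)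
      then show ?thesis using step single_valuedD[OF sv] by metis
    qed
  qed
  then show ?thesis
    using cyc by (metis converse_rtranclE tranclD)
qed

lemma child_tV0: "tpar T c = Some y \<Longrightarrow> c \<in> tV T"
  by (auto simp: tV_def)

lemma dom_tV: "y \<in> dom (tpar T) \<Longrightarrow> y \<in> tV T"
  by (simp add: tV_def)

lemma root_tV[simp]: "troot T \<in> tV T"
  by (simp add: tV_def)

lemma tleq_antisym:
  assumes w: "wtree T" and "tleq T a b" "tleq T b a"
  shows "a = b"
proof (rule ccontr)
  assume ne: "a \<noteq> b"
  then have "(a, a) \<in> (rel T)\<^sup>+"
    using assms(2,3) unfolding tleq_rel
    by (metis rtrancl_eq_or_trancl rtrancl_trancl_trancl)
  moreover have "a \<in> tV T"
    using tleq_cases[OF assms(2) ne] by (auto simp: tV_def)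
  then have "(a, troot T) \<in> (rel T)\<^sup>*"
    using wtree_reach[OF w] tleq_rel by metis
  ultimately have "\<exists>r'. (troot T, r') \<in> rel T"
    by (rule sv_cycle[OF sv_rel])
  then show False using wtree_root[OF w] by simp
qed

lemma tleq_down_tV: "tleq T y x \<Longrightarrow> x \<in> tV T \<Longrightarrow> y \<in> tV T"
  by (metis domI dom_tV tleq_cases)

lemma tleq_up_tV:
  assumes "wtree T" "tleq T y x" "y \<in> tV T" shows "x \<in> tV T"
  using assms(2) unfolding tleq_rel
proof (induction rule: rtrancl_induct)
  case base then show ?case using assms by simp
next
  case (step a b)
  then show ?case using wtree_ran[OF assms(1)] by simp
qed

lemma children_iff: "c \<in> children T x \<longleftrightarrow> tpar T c = Some x"
  by (simp add: children_def)

lemma wtree_finite: "wtree T \<Longrightarrow> finite (tV T)"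
  using wtree_fin by (simp add: tV_def)

lemma children_finite: "wtree T \<Longrightarrow> finite (children T x)"
  by (rule finite_subset[of _ "dom (tpar T)"]) (auto simp: children_def dest: wtree_fin)

lemma child_ne:
  assumes w: "wtree T" and c: "tpar T c = Some x" shows "c \<noteq> x"
proof
  assume "c = x"
  then have "(c, c) \<in> (rel T)\<^sup>+" using c by auto
  moreover have "(c, troot T) \<in> (rel T)\<^sup>*"
    using wtree_reach[OF w] c tleq_rel by (metis child_tV0)
  ultimately have "\<exists>r'. (troot T, r') \<in> rel T"
    by (rule sv_cycle[OF sv_rel])
  then show False using wtree_root[OF w] by simp
qed

lemma siblings_disjoint:
  assumes w: "wtree T" and "tpar T c1 = Some x" "tpar T c2 = Some x" "c1 \<noteq> c2"
    and "tleq T y c1" "tleq T y c2"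
  shows False
proof -
  from tleq_chain[OF assms(5,6)] show False
  proof
    assume h: "tleq T c1 c2"
    have "tleq T x c2" using tleq_par[OF h assms(4) assms(2)] .
    moreover have "tleq T c2 x" using assms(3) by (rule tleq_step)
    ultimately have "x = c2" using tleq_antisym[OF w] by blast
    then show False using child_ne[OF w assms(3)] by simp
  next
    assume h: "tleq T c2 c1"
    have "tleq T x c1" using tleq_par[OF h assms(4)[symmetric] assms(3)] .
    moreover have "tleq T c1 x" using assms(2) by (rule tleq_step)
    ultimately have "x = c1" using tleq_antisym[OF w] by blast
    then show False using child_ne[OF w assms(2)] by simp
  qed
qed

lemma par_tV: "wtree T \<Longrightarrow> tpar T c = Some y \<Longrightarrow> y \<in> tV T"
  unfolding wtree_def ran_def by blast

lemma child_tV: "tpar T c = Some y \<Longrightarrow> c \<in> tV T"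
  by (auto simp: tV_def)

definition desc :: "'a tree \<Rightarrow> 'a \<Rightarrow> 'a set" where
  "desc T y = {z \<in> tV T. tleq T z y}"

lemma desc_finite: "wtree T \<Longrightarrow> finite (desc T y)"
  unfolding desc_def by (drule wtree_finite) simp

lemma desc_child_less:
  assumes w: "wtree T" and c: "tpar T c = Some y"
  shows "card (desc T c) < card (desc T y)"
proof (rule psubset_card_mono[OF desc_finite[OF w]])
  have cy: "tleq T c y" using c by (rule tleq_step)
  have "y \<notin> desc T c"
    using tleq_antisym[OF w cy] child_ne[OF w c] unfolding desc_def by blast
  moreover have "y \<in> desc T y" using par_tV[OF w c] by (simp add: desc_def)
  moreover have "desc T c \<subseteq> desc T y" unfolding desc_def using cy by (blast intro: tleq_trans)
  ultimately show "desc T c \<subset> desc T y" by blast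
qed

lemma desc_less:
  assumes w: "wtree T" and "tleq T c y" "c \<noteq> y" "y \<in> tV T"
  shows "card (desc T c) < card (desc T y)"
proof (rule psubset_card_mono[OF desc_finite[OF w]])
  have "y \<notin> desc T c"
    using tleq_antisym[OF w assms(2)] assms(3) unfolding desc_def by blast
  moreover have "y \<in> desc T y" using assms by (simp add: desc_def)
  moreover have "desc T c \<subseteq> desc T y" unfolding desc_def using assms(2) by (blast intro: tleq_trans)
  ultimately show "desc T c \<subset> desc T y" by blast
qed

lemma leaf_below:
  assumes w: "wtree T" and "y \<in> tV T"
  shows "\<exists>l\<in>leaves T. tleq T l y"
  using assms(2)
proof (induction "card (desc T y)" arbitrary: y rule: less_induct)
  case less
  show ?case
  proof (cases "children T y = {}")
    case True
    show ?thesis unfolding leaves_def using less.prems True tleq_refl[of T y] by blast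
  next
    case False
    then obtain c where c: "tpar T c = Some y" by (auto simp: children_def)
    then have "c \<in> tV T" by (auto simp: tV_def)
    with less.hyps[OF desc_child_less[OF w c]] obtain l where "l \<in> leaves T" "tleq T l c"
      by blast
    then show ?thesis by (meson tleq_trans tleq_step[OF c])
  qed
qed



definition rst :: "'a tree \<Rightarrow> 'a tree \<Rightarrow> 'a set \<Rightarrow> bool" where
  "rst T T' W \<longleftrightarrow> troot T' = troot T \<and> dom (tpar T') = W - {troot T} \<and>
     (\<forall>y z. tpar T' y = Some z \<longrightarrow> z \<in> W \<and> tleq T y z \<and> y \<noteq> z \<and>
        (\<forall>w\<in>W. tleq T y w \<and> y \<noteq> w \<longrightarrow> tleq T z w))"

lemma rstD:
  assumes "rst T T' W" "tpar T' y = Some z"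
  shows "z \<in> W" "tleq T y z" "y \<noteq> z" "\<And>w. w \<in> W \<Longrightarrow> tleq T y w \<Longrightarrow> y \<noteq> w \<Longrightarrow> tleq T z w"
  using assms unfolding rst_def by blast+

lemma rst_root: "rst T T' W \<Longrightarrow> troot T' = troot T"
  unfolding rst_def by blast

lemma rst_dom: "rst T T' W \<Longrightarrow> dom (tpar T') = W - {troot T}"
  unfolding rst_def by blast

lemma rst_tV: "rst T T' W \<Longrightarrow> troot T \<in> W \<Longrightarrow> tV T' = W"
  unfolding tV_def using rst_root rst_dom by (metis insert_Diff)

lemma rst_fwd:
  assumes r: "rst T T' W" and h: "tleq T' u v"
  shows "tleq T u v"
  using h unfolding tleq_rel[of T']
proof (induction rule: rtrancl_induct)
  case base then show ?case by simp
next
  case (step y z)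
  then have "tpar T' y = Some z" by simp
  then have "tleq T y z" by (rule rstD(2)[OF r])
  then show ?case using tleq_trans[OF step.IH] by blast
qed

lemma rst_bwd:
  assumes w: "wtree T" and r: "rst T T' W" and WV: "W \<subseteq> tV T" and rW: "troot T \<in> W"
    and v: "v \<in> W"
  shows "u \<in> W \<Longrightarrow> tleq T u v \<Longrightarrow> tleq T' u v"
proof (induction "card (desc T v) - card (desc T u)" arbitrary: u rule: less_induct)
  case less
  show ?case
  proof (cases "u = v")
    case True then show ?thesis by simp
  next
    case False
    have vV: "v \<in> tV T" using v WV by blast
    have uV: "u \<in> tV T" using less.prems WV by blast
    have "u \<noteq> troot T"
    proof
      assume "u = troot T"
      then have "tleq T v u" using wtree_reach[OF w vV] by simp
      then show False using tleq_antisym[OF w less.prems(2)] False by blast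
    qed
    then have "u \<in> dom (tpar T')" using rst_dom[OF r] less.prems(1) by blast
    then obtain z where z: "tpar T' u = Some z" by blast
    have zW: "z \<in> W" and uz: "tleq T u z" and une: "u \<noteq> z" using rstD[OF r z] by auto
    have zv: "tleq T z v" using rstD(4)[OF r z v less.prems(2) False] .
    have zV: "z \<in> tV T" using zW WV by blast
    have c1: "card (desc T u) < card (desc T z)" by (rule desc_less[OF w uz une zV])
    have "desc T z \<subseteq> desc T v" unfolding desc_def using zv by (blast intro: tleq_trans)
    then have c2: "card (desc T z) \<le> card (desc T v)" by (rule card_mono[OF desc_finite[OF w]])
    have "tleq T' z v"
      by (rule less.hyps[OF _ zW zv]) (use c1 c2 in linarith)
    then show ?thesis using tleq_trans[OF tleq_step[OF z]] by blast
  qed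
qed

lemma rst_iff:
  assumes w: "wtree T" and r: "rst T T' W" and WV: "W \<subseteq> tV T" and rW: "troot T \<in> W"
    and "u \<in> W" "v \<in> W"
  shows "tleq T' u v \<longleftrightarrow> tleq T u v"
  using rst_fwd[OF r] rst_bwd[OF w r WV rW] assms(5,6) by blast

lemma rst_wtree:
  assumes w: "wtree T" and r: "rst T T' W" and WV: "W \<subseteq> tV T" and rW: "troot T \<in> W"
  shows "wtree T'"
proof -
  have tv: "tV T' = W" by (rule rst_tV[OF r rW])
  have "finite (dom (tpar T'))" using rst_dom[OF r] WV wtree_finite[OF w]
    by (metis Diff_subset finite_subset)
  moreover have "troot T' \<notin> dom (tpar T')" using rst_dom[OF r] rst_root[OF r] by blast
  moreover have "ran (tpar T') \<subseteq> tV T'"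
    unfolding tv ran_def using rstD(1)[OF r] by blast
  moreover have "\<forall>x\<in>tV T'. tleq T' x (troot T')"
  proof
    fix x assume "x \<in> tV T'"
    then have xW: "x \<in> W" using tv by simp
    then have "tleq T x (troot T)" using wtree_reach[OF w] WV by blast
    then show "tleq T' x (troot T')"
      using rst_bwd[OF w r WV rW rW xW] rst_root[OF r] by simp
  qed
  ultimately show ?thesis unfolding wtree_def by blast
qed

definition sepc :: "'a tree \<Rightarrow> 'a set \<Rightarrow> bool" where
  "sepc T W \<longleftrightarrow> (\<forall>y\<in>tV T - W. \<forall>c1 c2. tpar T c1 = Some y \<longrightarrow> tpar T c2 = Some y \<longrightarrow>
      (\<exists>w\<in>W. tleq T w c1) \<longrightarrow> (\<exists>w\<in>W. tleq T w c2) \<longrightarrow> c1 = c2)"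

lemma sepcD:
  "sepc T W \<Longrightarrow> y \<in> tV T \<Longrightarrow> y \<notin> W \<Longrightarrow> tpar T c1 = Some y \<Longrightarrow> tpar T c2 = Some y \<Longrightarrow>
    w1 \<in> W \<Longrightarrow> tleq T w1 c1 \<Longrightarrow> w2 \<in> W \<Longrightarrow> tleq T w2 c2 \<Longrightarrow> c1 = c2"
  unfolding sepc_def by blast

definition prune :: "'a tree \<Rightarrow> 'a \<Rightarrow> 'a tree" where
  "prune T v = (troot T, \<lambda>y. if tleq T y v then None else tpar T y)"

definition supp :: "'a tree \<Rightarrow> 'a \<Rightarrow> 'a tree" where
  "supp T u = (troot T, (\<lambda>y. if tpar T y = Some u then tpar T u else tpar T y)(u := None))"

lemma root_not_desc:
  assumes w: "wtree T" and "v \<in> tV T" "v \<noteq> troot T"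
  shows "\<not> tleq T (troot T) v"
  using tleq_antisym[OF w _ wtree_reach[OF w assms(2)]] assms(3) by blast

lemma nonroot_dom:
  assumes "y \<in> tV T" "y \<noteq> troot T" shows "\<exists>z. tpar T y = Some z"
  using assms unfolding tV_def by blast

lemma prune_rst:
  assumes w: "wtree T" and v: "v \<in> tV T" "v \<noteq> troot T"
  shows "rst T (prune T v) (tV T - desc T v)"
proof -
  have rnd: "\<not> tleq T (troot T) v" by (rule root_not_desc[OF w v])
  have "troot (prune T v) = troot T" by (simp add: prune_def)
  moreover have "dom (tpar (prune T v)) = (tV T - desc T v) - {troot T}"
  proof
    show "dom (tpar (prune T v)) \<subseteq> tV T - desc T v - {troot T}"
    proof
      fix y assume "y \<in> dom (tpar (prune T v))"
      then obtain z where "(if tleq T y v then None else tpar T y) = Some z"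
        by (auto simp: prune_def)
      then have a: "\<not> tleq T y v" and b: "tpar T y = Some z" by (auto split: if_splits)
      have "y \<in> tV T" by (rule child_tV0[OF b])
      moreover have "y \<noteq> troot T" using b wtree_root[OF w] by (metis option.distinct(1))
      moreover have "y \<notin> desc T v" using a by (simp add: desc_def)
      ultimately show "y \<in> tV T - desc T v - {troot T}" by blast
    qed
  next
    show "tV T - desc T v - {troot T} \<subseteq> dom (tpar (prune T v))"
    proof
      fix y assume y: "y \<in> tV T - desc T v - {troot T}"
      have y1: "y \<in> tV T" "y \<noteq> troot T" using y by auto
      obtain z where z: "tpar T y = Some z" using nonroot_dom[OF y1] by blast
      have "\<not> tleq T y v" using y by (simp add: desc_def)
      then have "tpar (prune T v) y = Some z" using z by (simp add: prune_def)
      then show "y \<in> dom (tpar (prune T v))" by blast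
    qed
  qed
  moreover have "\<forall>y z. tpar (prune T v) y = Some z \<longrightarrow> z \<in> tV T - desc T v \<and> tleq T y z \<and> y \<noteq> z \<and>
        (\<forall>w\<in>tV T - desc T v. tleq T y w \<and> y \<noteq> w \<longrightarrow> tleq T z w)"
  proof (intro allI impI)
    fix y z assume "tpar (prune T v) y = Some z"
    then have ny: "\<not> tleq T y v" and yz: "tpar T y = Some z"
      by (auto simp: prune_def split: if_splits)
    have "z \<in> tV T" by (rule wtree_ran[OF w yz])
    moreover have "\<not> tleq T z v" using ny tleq_trans[OF tleq_step[OF yz]] by blast
    moreover have "tleq T y z" by (rule tleq_step[OF yz])
    moreover have "y \<noteq> z" by (rule child_ne[OF w yz])
    moreover have "\<forall>w\<in>tV T - desc T v. tleq T y w \<and> y \<noteq> w \<longrightarrow> tleq T z w"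
      using tleq_par[where p=z, OF _ _ yz] by blast
    ultimately show "z \<in> tV T - desc T v \<and> tleq T y z \<and> y \<noteq> z \<and>
        (\<forall>w\<in>tV T - desc T v. tleq T y w \<and> y \<noteq> w \<longrightarrow> tleq T z w)"
      by (simp add: desc_def)
  qed
  ultimately show ?thesis unfolding rst_def by blast
qed

lemma prune_W:
  assumes w: "wtree T" and v: "v \<in> tV T" "v \<noteq> troot T"
  shows "troot T \<in> tV T - desc T v" "tV T - desc T v \<subseteq> tV T"
  using root_not_desc[OF w v] by (auto simp: desc_def)

lemma supp_rst:
  assumes w: "wtree T" and u: "u \<in> tV T" "u \<noteq> troot T" and ch: "children T u = {w0}"
  shows "rst T (supp T u) (tV T - {u})"
proof -
  obtain pu where pu: "tpar T u = Some pu" using nonroot_dom[OF u] by blast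
  have P: "tpar (supp T u) y = (if y = u then None else if tpar T y = Some u then Some pu else tpar T y)"
    for y by (simp add: supp_def pu)
  have "troot (supp T u) = troot T" by (simp add: supp_def)
  moreover have "dom (tpar (supp T u)) = (tV T - {u}) - {troot T}"
  proof
    show "dom (tpar (supp T u)) \<subseteq> tV T - {u} - {troot T}"
    proof
      fix y assume "y \<in> dom (tpar (supp T u))"
      then obtain z where "tpar (supp T u) y = Some z" by blast
      then have a: "y \<noteq> u" and "\<exists>z'. tpar T y = Some z'" unfolding P by (auto split: if_splits)
      then obtain z' where b: "tpar T y = Some z'" by blast
      have "y \<in> tV T" by (rule child_tV0[OF b])
      moreover have "y \<noteq> troot T" using b wtree_root[OF w] by (metis option.distinct(1))
      ultimately show "y \<in> tV T - {u} - {troot T}" using a by blast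
    qed
  next
    show "tV T - {u} - {troot T} \<subseteq> dom (tpar (supp T u))"
    proof
      fix y assume y: "y \<in> tV T - {u} - {troot T}"
      have y1: "y \<in> tV T" "y \<noteq> troot T" using y by auto
      obtain z where z: "tpar T y = Some z" using nonroot_dom[OF y1] by blast
      have "y \<noteq> u" using y by blast
      then have "tpar (supp T u) y \<noteq> None" using z unfolding P by simp
      then show "y \<in> dom (tpar (supp T u))" by blast
    qed
  qed
  moreover have "\<forall>y z. tpar (supp T u) y = Some z \<longrightarrow> z \<in> tV T - {u} \<and> tleq T y z \<and> y \<noteq> z \<and>
        (\<forall>w\<in>tV T - {u}. tleq T y w \<and> y \<noteq> w \<longrightarrow> tleq T z w)"
  proof (intro allI impI)
    fix y z assume h: "tpar (supp T u) y = Some z"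
    then have yu: "y \<noteq> u" unfolding P by (auto split: if_splits)
    show "z \<in> tV T - {u} \<and> tleq T y z \<and> y \<noteq> z \<and>
        (\<forall>w\<in>tV T - {u}. tleq T y w \<and> y \<noteq> w \<longrightarrow> tleq T z w)"
    proof (cases "tpar T y = Some u")
      case True
      then have z: "z = pu" using h yu unfolding P by simp
      have zV: "z \<in> tV T" using wtree_ran[OF w pu] z by simp
      have zu: "z \<noteq> u" using child_ne[OF w pu] z by simp
      have yz: "tleq T y z" using tleq_trans[OF tleq_step[OF True] tleq_step[OF pu]] z by simp
      have "y \<noteq> z"
      proof
        assume "y = z"
        then have "tleq T u y" using tleq_step[OF pu] z by simp
        then show False using tleq_antisym[OF w tleq_step[OF True]] yu by blast
      qed
      moreover have "\<forall>w\<in>tV T - {u}. tleq T y w \<and> y \<noteq> w \<longrightarrow> tleq T z w"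
      proof (intro ballI impI)
        fix w' assume "w' \<in> tV T - {u}" "tleq T y w' \<and> y \<noteq> w'"
        then have a: "tleq T u w'" using tleq_par[where p=u, OF _ _ True] by blast
        have b: "u \<noteq> w'" using \<open>w' \<in> tV T - {u}\<close> by blast
        show "tleq T z w'" using tleq_par[OF a b pu] z by simp
      qed
      ultimately show ?thesis using zV zu yz by blast
    next
      case False
      then have yz: "tpar T y = Some z" using h yu unfolding P by simp
      have "z \<noteq> u" using False yz by simp
      moreover have "z \<in> tV T" by (rule wtree_ran[OF w yz])
      moreover have "tleq T y z" by (rule tleq_step[OF yz])
      moreover have "y \<noteq> z" by (rule child_ne[OF w yz])
      moreover have "\<forall>w\<in>tV T - {u}. tleq T y w \<and> y \<noteq> w \<longrightarrow> tleq T z w"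
        using tleq_par[where p=z, OF _ _ yz] by blast
      ultimately show ?thesis by blast
    qed
  qed
  ultimately show ?thesis unfolding rst_def by blast
qed



lemma prune_sepc:
  assumes w: "wtree T" and v: "v \<in> tV T" "v \<noteq> troot T"
    and WW: "W' \<subseteq> tV T - desc T v" and s: "sepc (prune T v) W'"
  shows "sepc T W'"
  unfolding sepc_def
proof (intro ballI allI impI)
  fix y c1 c2
  assume y: "y \<in> tV T - W'" and p1: "tpar T c1 = Some y" and p2: "tpar T c2 = Some y"
    and e1: "\<exists>w\<in>W'. tleq T w c1" and e2: "\<exists>w\<in>W'. tleq T w c2"
  define W0 where "W0 = tV T - desc T v"
  have r: "rst T (prune T v) W0" unfolding W0_def by (rule prune_rst[OF w v])
  have rW: "troot T \<in> W0" "W0 \<subseteq> tV T" unfolding W0_def by (rule prune_W[OF w v])+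
  have tv: "tV (prune T v) = W0" by (rule rst_tV[OF r rW(1)])
  obtain w1 where w1: "w1 \<in> W'" "tleq T w1 c1" using e1 by blast
  obtain w2 where w2: "w2 \<in> W'" "tleq T w2 c2" using e2 by blast
  have nw1: "\<not> tleq T w1 v" using w1(1) WW by (auto simp: desc_def)
  have nw2: "\<not> tleq T w2 v" using w2(1) WW by (auto simp: desc_def)
  have nc1: "\<not> tleq T c1 v" using nw1 tleq_trans[OF w1(2)] by blast
  have nc2: "\<not> tleq T c2 v" using nw2 tleq_trans[OF w2(2)] by blast
  have ny: "\<not> tleq T y v" using nc1 tleq_trans[OF tleq_step[OF p1]] by blast
  have c1W: "c1 \<in> W0" using child_tV0[OF p1] nc1 unfolding W0_def desc_def by blast
  have c2W: "c2 \<in> W0" using child_tV0[OF p2] nc2 unfolding W0_def desc_def by blast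
  have w1W: "w1 \<in> W0" using w1(1) WW W0_def by blast
  have w2W: "w2 \<in> W0" using w2(1) WW W0_def by blast
  have yW: "y \<in> W0" using y ny unfolding W0_def desc_def by blast
  have q1: "tpar (prune T v) c1 = Some y" using p1 nc1 by (simp add: prune_def)
  have q2: "tpar (prune T v) c2 = Some y" using p2 nc2 by (simp add: prune_def)
  have t1: "tleq (prune T v) w1 c1" using rst_iff[OF w r rW(2) rW(1) w1W c1W] w1(2) by blast
  have t2: "tleq (prune T v) w2 c2" using rst_iff[OF w r rW(2) rW(1) w2W c2W] w2(2) by blast
  show "c1 = c2"
    by (rule sepcD[OF s _ _ q1 q2 w1(1) t1 w2(1) t2]) (use yW tv y in auto)
qed

lemma supp_sepc:
  assumes w: "wtree T" and u: "u \<in> tV T" "u \<noteq> troot T" and ch: "children T u = {w0}"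
    and WW: "W' \<subseteq> tV T - {u}" and s: "sepc (supp T u) W'"
  shows "sepc T W'"
  unfolding sepc_def
proof (intro ballI allI impI)
  fix y c1 c2
  assume y: "y \<in> tV T - W'" and p1: "tpar T c1 = Some y" and p2: "tpar T c2 = Some y"
    and e1: "\<exists>w\<in>W'. tleq T w c1" and e2: "\<exists>w\<in>W'. tleq T w c2"
  obtain pu where pu: "tpar T u = Some pu" using nonroot_dom[OF u] by blast
  have P: "tpar (supp T u) x = (if x = u then None else if tpar T x = Some u then Some pu else tpar T x)"
    for x by (simp add: supp_def pu)
  define W0 where "W0 = tV T - {u}"
  have r: "rst T (supp T u) W0" unfolding W0_def by (rule supp_rst[OF w u ch])
  have rW: "troot T \<in> W0" "W0 \<subseteq> tV T" unfolding W0_def using u by auto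
  have tv: "tV (supp T u) = W0" by (rule rst_tV[OF r rW(1)])
  have w0u: "tpar T w0 = Some u" using ch by (auto simp: children_def)
  have w0ne: "w0 \<noteq> u" by (rule child_ne[OF w w0u])
  show "c1 = c2"
  proof (cases "y = u")
    case True
    then have "c1 \<in> children T u" "c2 \<in> children T u" using p1 p2 by (auto simp: children_def)
    then have "c1 = w0" "c2 = w0" using ch by auto
    then show ?thesis by simp
  next
    case yu: False
    define f where "f c = (if c = u then w0 else c)" for c
    have key: "tpar (supp T u) (f c) = Some y \<and> (\<exists>w\<in>W'. tleq (supp T u) w (f c))"
      if pc: "tpar T c = Some y" and ec: "\<exists>w\<in>W'. tleq T w c" for c
    proof -
      obtain wc where wc: "wc \<in> W'" "tleq T wc c" using ec by blast
      have wcW: "wc \<in> W0" using wc(1) WW W0_def by blast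
      show ?thesis
      proof (cases "c = u")
        case True
        then have "pu = y" using pc pu by simp
        then have a: "tpar (supp T u) (f c) = Some y" using True w0u w0ne unfolding f_def P by simp
        have "wc \<noteq> u" using wc(1) WW by blast
        then obtain c' where c': "tpar T c' = Some u" "tleq T wc c'"
          using tleq_cases2[of T wc u] wc(2) True by blast
        then have "c' = w0" using ch by (auto simp: children_def)
        then have "tleq T wc w0" using c' by simp
        moreover have "w0 \<in> W0" using child_tV0[OF w0u] w0ne W0_def by blast
        ultimately have "tleq (supp T u) wc w0" using rst_iff[OF w r rW(2) rW(1) wcW] by blast
        then show ?thesis using a wc(1) True f_def by auto
      next
        case False
        have "tpar T c \<noteq> Some u" using pc yu by simp
        then have a: "tpar (supp T u) (f c) = Some y" using False pc unfolding f_def P by simp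
        have "c \<in> W0" using child_tV0[OF pc] False W0_def by blast
        then have "tleq (supp T u) wc c" using rst_iff[OF w r rW(2) rW(1) wcW] wc(2) by blast
        then show ?thesis using a wc(1) False f_def by auto
      qed
    qed
    obtain v1 where v1: "v1 \<in> W'" "tleq (supp T u) v1 (f c1)" using key[OF p1 e1] by blast
    obtain v2 where v2: "v2 \<in> W'" "tleq (supp T u) v2 (f c2)" using key[OF p2 e2] by blast
    have yW: "y \<in> tV (supp T u)" using tv y yu W0_def by blast
    have "f c1 = f c2"
      by (rule sepcD[OF s yW _ conjunct1[OF key[OF p1 e1]] conjunct1[OF key[OF p2 e2]] v1 v2])
        (use y in blast)
    then show ?thesis
      using p1 p2 w0u yu unfolding f_def by (auto split: if_splits)
  qed
qed

lemma step_props: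
  assumes w: "wtree T" and st: "ext_step T T'"
  shows "\<exists>W. rst T T' W \<and> troot T \<in> W \<and> W \<subseteq> tV T \<and> (\<forall>W'. W' \<subseteq> W \<longrightarrow> sepc T' W' \<longrightarrow> sepc T W')"
proof -
  from st have "prune_step T T' \<or> suppress_step T T'" by (simp add: ext_step_def)
  then show ?thesis
  proof
    assume "prune_step T T'"
    then obtain v where v: "v \<in> tV T" "v \<noteq> troot T" and T': "T' = prune T v"
      unfolding prune_step_def prune_def by blast
    show ?thesis
      using prune_rst[OF w v] prune_W[OF w v] prune_sepc[OF w v] T' by blast
  next
    assume "suppress_step T T'"
    then obtain u w0 where u: "u \<in> tV T" "u \<noteq> troot T" and ch: "children T u = {w0}"
      and T': "T' = supp T u"
      unfolding suppress_step_def supp_def by blast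
    have "troot T \<in> tV T - {u}" using u by simp
    then show ?thesis
      using supp_rst[OF w u ch] supp_sepc[OF w u ch] T' by blast
  qed
qed

definition agree :: "'a tree \<Rightarrow> 'a tree \<Rightarrow> bool" where
  "agree G T \<longleftrightarrow> (\<forall>u\<in>tV G. \<forall>v\<in>tV G. tleq G u v \<longleftrightarrow> tleq T u v)"

lemma reach_fwd:
  assumes "ext_step\<^sup>*\<^sup>* T G"
  shows "wtree T \<Longrightarrow> troot G = troot T \<and> tV G \<subseteq> tV T \<and> agree G T \<and> sepc T (tV G) \<and> wtree G"
  using assms
proof (induction rule: converse_rtranclp_induct)
  case base
  then show ?case by (simp add: agree_def sepc_def)
next
  case (step T T1)
  obtain W where W: "rst T T1 W" "troot T \<in> W" "W \<subseteq> tV T"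
    and tr: "\<forall>W'. W' \<subseteq> W \<longrightarrow> sepc T1 W' \<longrightarrow> sepc T W'"
    using step_props[OF step.prems step.hyps(1)] by blast
  have w1: "wtree T1" by (rule rst_wtree[OF step.prems W(1) W(3) W(2)])
  have tv: "tV T1 = W" by (rule rst_tV[OF W(1) W(2)])
  from step.IH[OF w1] have I: "troot G = troot T1" "tV G \<subseteq> tV T1" "agree G T1" "sepc T1 (tV G)" "wtree G"
    by auto
  have "troot G = troot T" using I(1) rst_root[OF W(1)] by simp
  moreover have "tV G \<subseteq> tV T" using I(2) tv W(3) by blast
  moreover have "agree G T"
    unfolding agree_def
  proof (intro ballI)
    fix u v assume "u \<in> tV G" "v \<in> tV G"
    then show "tleq G u v \<longleftrightarrow> tleq T u v"
      using I(3) rst_iff[OF step.prems W(1) W(3) W(2)] I(2) tv unfolding agree_def by blast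
  qed
  moreover have "sepc T (tV G)" using tr I(2,4) tv by blast
  ultimately show ?case using I(5) by blast
qed

lemma par_transfer:
  assumes wT: "wtree T" and wG: "wtree G" and rt: "troot G = troot T" and tv: "tV G = tV T"
    and ag: "agree G T" and yz: "tpar T y = Some z"
  shows "tpar G y = Some z"
proof -
  have yV: "y \<in> tV G" using child_tV0[OF yz] tv by simp
  have yr: "y \<noteq> troot G" using yz wtree_root[OF wT] rt by (metis option.distinct(1))
  obtain z' where z': "tpar G y = Some z'" using nonroot_dom[OF yV yr] by blast
  have zV: "z \<in> tV G" using wtree_ran[OF wT yz] tv by simp
  have z'V: "z' \<in> tV G" by (rule wtree_ran[OF wG z'])
  have "tleq T y z'" using ag yV z'V tleq_step[OF z'] unfolding agree_def by blast
  then have a: "tleq T z z'" using tleq_par[OF _ child_ne[OF wG z'] yz] by blast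
  have "tleq G y z" using ag yV zV tleq_step[OF yz] unfolding agree_def by blast
  then have "tleq G z' z" using tleq_par[OF _ child_ne[OF wT yz] z'] by blast
  then have "tleq T z' z" using ag zV z'V unfolding agree_def by blast
  then have "z = z'" using tleq_antisym[OF wT a] by blast
  then show ?thesis using z' by simp
qed

lemma tree_eq:
  assumes wT: "wtree T" and wG: "wtree G" and rt: "troot G = troot T" and tv: "tV G = tV T"
    and ag: "agree G T"
  shows "G = T"
proof -
  have ag2: "agree T G" using ag tv unfolding agree_def by blast
  have "tpar G = tpar T"
  proof
    fix y
    show "tpar G y = tpar T y"
    proof (cases "tpar T y")
      case None
      show ?thesis
      proof (cases "tpar G y")
        case None then show ?thesis using \<open>tpar T y = None\<close> by simp
      next
        case (Some z)
        then have "tpar T y = Some z"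
          using par_transfer[OF wG wT rt[symmetric] tv[symmetric] ag2] by blast
        then show ?thesis using None by simp
      qed
    next
      case (Some z)
      then show ?thesis using par_transfer[OF wT wG rt tv ag] by simp
    qed
  qed
  then show ?thesis using rt unfolding troot_def tpar_def by (simp add: prod_eq_iff)
qed

lemma sepc_sub:
  assumes r: "rst T T1 W1" and sub: "\<And>c y. tpar T1 c = Some y \<Longrightarrow> tpar T c = Some y"
    and tv: "tV T1 \<subseteq> tV T" and s: "sepc T W"
  shows "sepc T1 W"
  unfolding sepc_def
proof (intro ballI allI impI)
  fix y c1 c2
  assume y: "y \<in> tV T1 - W" and p1: "tpar T1 c1 = Some y" and p2: "tpar T1 c2 = Some y"
    and e1: "\<exists>w\<in>W. tleq T1 w c1" and e2: "\<exists>w\<in>W. tleq T1 w c2"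
  obtain w1 where w1: "w1 \<in> W" "tleq T1 w1 c1" using e1 by blast
  obtain w2 where w2: "w2 \<in> W" "tleq T1 w2 c2" using e2 by blast
  show "c1 = c2"
    by (rule sepcD[OF s _ _ sub[OF p1] sub[OF p2] w1(1) rst_fwd[OF r w1(2)] w2(1) rst_fwd[OF r w2(2)]])
      (use y tv in auto)
qed

lemma reach_bwd:
  assumes wG: "wtree G"
  shows "wtree T \<Longrightarrow> troot G = troot T \<Longrightarrow> tV G \<subseteq> tV T \<Longrightarrow> agree G T \<Longrightarrow> sepc T (tV G)
    \<Longrightarrow> ext_step\<^sup>*\<^sup>* T G"
proof (induction "card (tV T - tV G)" arbitrary: T rule: less_induct)
  case less
  note wT = less.prems(1) and rt = less.prems(2) and sub = less.prems(3) and ag = less.prems(4)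
    and sp = less.prems(5)
  define W where "W = tV G"
  have rW: "troot T \<in> W" using rt W_def by (metis root_tV)
  show ?case
  proof (cases "tV T \<subseteq> tV G")
    case True
    then have "tV G = tV T" using sub by blast
    then have "G = T" using tree_eq[OF wT wG rt _ ag] by blast
    then show ?thesis by simp
  next
    case False
    then obtain y0 where y0: "y0 \<in> tV T" "y0 \<notin> W" using W_def by blast
    show ?thesis
    proof (cases "\<exists>y\<in>tV T - W. \<not> (\<exists>w\<in>W. tleq T w y)")
      case True
      then obtain y where y: "y \<in> tV T" "y \<notin> W" and nw: "\<not> (\<exists>w\<in>W. tleq T w y)" by blast
      have yr: "y \<noteq> troot T" using y rW by blast
      define T1 where "T1 = prune T y"
      have st: "ext_step T T1"
        unfolding ext_step_def prune_step_def T1_def prune_def using y(1) yr by blast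
      define W1 where "W1 = tV T - desc T y"
      have r: "rst T T1 W1" unfolding T1_def W1_def by (rule prune_rst[OF wT y(1) yr])
      have rW1: "troot T \<in> W1" "W1 \<subseteq> tV T" unfolding W1_def by (rule prune_W[OF wT y(1) yr])+
      have w1: "wtree T1" by (rule rst_wtree[OF wT r rW1(2) rW1(1)])
      have tv1: "tV T1 = W1" by (rule rst_tV[OF r rW1(1)])
      have WW1: "W \<subseteq> W1" using nw sub W_def unfolding W1_def desc_def by blast
      have "tV T1 - W \<subset> tV T - W"
      proof -
        have "y \<in> tV T - W" using y by blast
        moreover have "y \<notin> tV T1 - W" using tv1 y(1) unfolding W1_def desc_def by simp
        ultimately show ?thesis using tv1 rW1(2) by blast
      qed
      then have lt: "card (tV T1 - tV G) < card (tV T - tV G)"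
        using W_def wtree_finite[OF wT] by (metis finite_Diff psubset_card_mono)
      have ag1: "agree G T1"
        unfolding agree_def
      proof (intro ballI)
        fix u v assume "u \<in> tV G" "v \<in> tV G"
        then show "tleq G u v \<longleftrightarrow> tleq T1 u v"
          using ag rst_iff[OF wT r rW1(2) rW1(1)] WW1 W_def unfolding agree_def by blast
      qed
      have sp1: "sepc T1 (tV G)"
      proof (rule sepc_sub[OF r _ _ sp])
        show "\<And>c y'. tpar T1 c = Some y' \<Longrightarrow> tpar T c = Some y'"
          unfolding T1_def prune_def by (auto split: if_splits)
        show "tV T1 \<subseteq> tV T" using tv1 rW1(2) by simp
      qed
      have "ext_step\<^sup>*\<^sup>* T1 G"
        by (rule less.hyps[OF lt w1]) (use rt rst_root[OF r] sub WW1 W_def tv1 ag1 sp1 in auto)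
      then show ?thesis by (rule converse_rtranclp_into_rtranclp[of ext_step, OF st])
    next
      case False
      then have allw: "\<And>y. y \<in> tV T \<Longrightarrow> y \<notin> W \<Longrightarrow> \<exists>w\<in>W. tleq T w y" by blast
      have yr: "y0 \<noteq> troot T" using y0 rW by blast
      obtain w where w: "w \<in> W" "tleq T w y0" using allw[OF y0] by blast
      have wy: "w \<noteq> y0" using w y0 by blast
      obtain c0 where c0: "tpar T c0 = Some y0" "tleq T w c0" using tleq_cases2[OF w(2) wy] by blast
      have ch: "children T y0 = {c0}"
      proof
        show "{c0} \<subseteq> children T y0" using c0 by (simp add: children_def)
        show "children T y0 \<subseteq> {c0}"
        proof
          fix c assume "c \<in> children T y0"
          then have pc: "tpar T c = Some y0" by (simp add: children_def)
          have "\<exists>w'\<in>W. tleq T w' c"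
          proof (cases "c \<in> W")
            case True then show ?thesis using tleq_refl[of T c] by blast
          next
            case False show ?thesis by (rule allw[OF child_tV0[OF pc] False])
          qed
          then obtain w' where w': "w' \<in> W" "tleq T w' c" by blast
          have "c = c0" by (rule sepcD[OF sp y0(1) y0(2)[unfolded W_def] pc c0(1) w'(1)[unfolded W_def] w'(2) w(1)[unfolded W_def] c0(2)])
          then show "c \<in> {c0}" by simp
        qed
      qed
      define T1 where "T1 = supp T y0"
      have st: "ext_step T T1"
        unfolding ext_step_def suppress_step_def T1_def supp_def using y0(1) yr ch by blast
      define W1 where "W1 = tV T - {y0}"
      have r: "rst T T1 W1" unfolding T1_def W1_def by (rule supp_rst[OF wT y0(1) yr ch])
      have rW1: "troot T \<in> W1" "W1 \<subseteq> tV T" unfolding W1_def using yr by auto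
      have w1: "wtree T1" by (rule rst_wtree[OF wT r rW1(2) rW1(1)])
      have tv1: "tV T1 = W1" by (rule rst_tV[OF r rW1(1)])
      have WW1: "W \<subseteq> W1" using sub y0 W_def unfolding W1_def by blast
      have "tV T1 - W \<subset> tV T - W" using tv1 y0 unfolding W1_def by blast
      then have lt: "card (tV T1 - tV G) < card (tV T - tV G)"
        using W_def wtree_finite[OF wT] by (metis finite_Diff psubset_card_mono)
      have ag1: "agree G T1"
        unfolding agree_def
      proof (intro ballI)
        fix u v assume "u \<in> tV G" "v \<in> tV G"
        then show "tleq G u v \<longleftrightarrow> tleq T1 u v"
          using ag rst_iff[OF wT r rW1(2) rW1(1)] WW1 W_def unfolding agree_def by blast
      qed
      obtain pu where pu: "tpar T y0 = Some pu" using nonroot_dom[OF y0(1) yr] by blast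
      have P: "tpar T1 x = (if x = y0 then None else if tpar T x = Some y0 then Some pu else tpar T x)"
        for x by (simp add: T1_def supp_def pu)
      have sp1: "sepc T1 W"
        unfolding sepc_def
      proof (intro ballI allI impI)
        fix y c1 c2
        assume y: "y \<in> tV T1 - W" and p1: "tpar T1 c1 = Some y" and p2: "tpar T1 c2 = Some y"
          and e1: "\<exists>w\<in>W. tleq T1 w c1" and e2: "\<exists>w\<in>W. tleq T1 w c2"
        define g where "g c = (if tpar T c = Some y0 then y0 else c)" for c
        have key: "tpar T (g c) = Some y \<and> (\<exists>w\<in>W. tleq T w (g c))"
          if pc: "tpar T1 c = Some y" and ec: "\<exists>w\<in>W. tleq T1 w c" for c
        proof -
          obtain wc where wc: "wc \<in> W" "tleq T1 wc c" using ec by blast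
          have wcT: "tleq T wc c" by (rule rst_fwd[OF r wc(2)])
          show ?thesis
          proof (cases "tpar T c = Some y0")
            case True
            then have "pu = y" using pc P by (metis option.inject option.simps(3))
            then show ?thesis using True pu wc(1) tleq_trans[OF wcT tleq_step[OF True]] g_def by auto
          next
            case False
            then have "tpar T c = Some y" using pc P by (metis option.simps(3))
            then show ?thesis using False wc(1) wcT g_def by auto
          qed
        qed
        obtain v1 where v1: "v1 \<in> W" "tleq T v1 (g c1)" using key[OF p1 e1] by blast
        obtain v2 where v2: "v2 \<in> W" "tleq T v2 (g c2)" using key[OF p2 e2] by blast
        have yT: "y \<in> tV T" "y \<notin> W" using y tv1 rW1(2) by auto
        have eq: "g c1 = g c2"
          by (rule sepcD[OF sp yT(1) yT(2)[unfolded W_def] conjunct1[OF key[OF p1 e1]] conjunct1[OF key[OF p2 e2]] v1(1)[unfolded W_def] v1(2) v2(1)[unfolded W_def] v2(2)])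
        have c1T: "c1 \<in> W1" using child_tV0[OF p1] tv1 by simp
        have c2T: "c2 \<in> W1" using child_tV0[OF p2] tv1 by simp
        show "c1 = c2"
        proof (cases "tpar T c1 = Some y0")
          case T1: True
          show ?thesis
          proof (cases "tpar T c2 = Some y0")
            case True
            then have "c1 \<in> children T y0" "c2 \<in> children T y0" using T1 by (auto simp: children_def)
            then have "c1 = c0" "c2 = c0" using ch by auto
            then show ?thesis by simp
          next
            case False
            then have "c2 = y0" using eq T1 g_def by simp
            then show ?thesis using c2T W1_def by simp
          qed
        next
          case F1: False
          show ?thesis
          proof (cases "tpar T c2 = Some y0")
            case True
            then have "c1 = y0" using eq F1 g_def by simp
            then show ?thesis using c1T W1_def by simp
          next
            case False
            then show ?thesis using eq F1 g_def by simp
          qed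
        qed
      qed
      have "ext_step\<^sup>*\<^sup>* T1 G"
        by (rule less.hyps[OF lt w1]) (use rt rst_root[OF r] sub WW1 W_def tv1 ag1 sp1 in auto)
      then show ?thesis by (rule converse_rtranclp_into_rtranclp[of ext_step, OF st])
    qed
  qed
qed



lemma is_tree_card:
  assumes "is_tree T" "y \<in> tV T" "y \<noteq> troot T"
  shows "card (children T y) = 0 \<or> card (children T y) = 2"
  using assms unfolding is_tree_def by blast

lemma is_tree_root_card: "is_tree T \<Longrightarrow> card (children T (troot T)) = 1"
  unfolding is_tree_def by blast

lemma is_tree_card2:
  assumes t: "is_tree T" and y: "y \<in> tV T" "y \<noteq> troot T" and c: "tpar T c = Some y"
  shows "card (children T y) = 2"
proof -
  have "c \<in> children T y" using c by (simp add: children_def)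
  moreover have "finite (children T y)" by (rule children_finite[OF is_tree_wtree[OF t]])
  ultimately have "card (children T y) \<noteq> 0" by auto
  then show ?thesis using is_tree_card[OF t y] by auto
qed

lemma cons_mono:
  assumes t: "is_tree T" and wS: "wtree S" and c: "consistent T S \<rho>" and h: "tleq T y z"
  shows "tleq S (\<rho> y) (\<rho> z)"
  using h unfolding tleq_rel[of T]
proof (induction rule: converse_rtrancl_induct)
  case base then show ?case by simp
next
  case (step y y1)
  have py: "tpar T y = Some y1" using step.hyps(1) by simp
  have wT: "wtree T" by (rule is_tree_wtree[OF t])
  have yV: "y \<in> tV T" by (rule child_tV0[OF py])
  have y1V: "y1 \<in> tV T" by (rule wtree_ran[OF wT py])
  have "tleq S (\<rho> y) (\<rho> y1)"
  proof (cases "y1 = troot T")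
    case True
    have "\<rho> y \<in> tV S" using c yV unfolding consistent_def by blast
    moreover have "\<rho> y1 = troot S" using c True unfolding consistent_def by blast
    ultimately show ?thesis using wtree_reach[OF wS] by simp
  next
    case False
    have c2: "card (children T y1) = 2" by (rule is_tree_card2[OF t y1V False py])
    have yc: "y \<in> children T y1" using py by (simp add: children_def)
    have "is_dup T S \<rho> y1 \<or> is_spec T S \<rho> y1" using c y1V c2 unfolding consistent_def by blast
    then show ?thesis
    proof
      assume "is_dup T S \<rho> y1"
      then have "\<rho> y = \<rho> y1" using yc unfolding is_dup_def by blast
      then show ?thesis by simp
    next
      assume "is_spec T S \<rho> y1"
      then have "\<rho> y \<in> children S (\<rho> y1)" using yc unfolding is_spec_def by blast
      then show ?thesis by (simp add: children_def tleq_step)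
    qed
  qed
  then show ?case using tleq_trans[OF _ step.IH] by blast
qed

lemma lca_props:
  assumes wS: "wtree S" and A: "A \<subseteq> tV S" "A \<noteq> {}"
  shows "lca S A \<in> tV S \<and> (\<forall>a\<in>A. tleq S a (lca S A)) \<and>
    (\<forall>y\<in>tV S. (\<forall>a\<in>A. tleq S a y) \<longrightarrow> tleq S (lca S A) y)"
proof -
  define U where "U = {y \<in> tV S. \<forall>a\<in>A. tleq S a y}"
  have "troot S \<in> U" unfolding U_def using A wtree_reach[OF wS] by auto
  then obtain z where z: "z \<in> U" and zmin: "\<And>y. y \<in> U \<Longrightarrow> card (desc S z) \<le> card (desc S y)"
    using ex_has_least_nat[of "\<lambda>y. y \<in> U" "troot S" "\<lambda>y. card (desc S y)"] by blast
  obtain a0 where a0: "a0 \<in> A" using A by blast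
  have least: "tleq S z y" if y: "y \<in> U" for y
  proof -
    have "tleq S a0 z" "tleq S a0 y" using z y a0 unfolding U_def by auto
    then have "tleq S z y \<or> tleq S y z" by (rule tleq_chain)
    then show ?thesis
    proof
      assume yz: "tleq S y z"
      show ?thesis
      proof (cases "y = z")
        case True then show ?thesis by simp
      next
        case False
        have "z \<in> tV S" using z U_def by simp
        then have "card (desc S y) < card (desc S z)" using desc_less[OF wS yz False] by blast
        then show ?thesis using zmin[OF y] by simp
      qed
    qed
  qed
  define P where "P x = (x \<in> tV S \<and> (\<forall>a\<in>A. tleq S a x) \<and>
                 (\<forall>y\<in>tV S. (\<forall>a\<in>A. tleq S a y) \<longrightarrow> tleq S x y))" for x
  have Pz: "P z" unfolding P_def using z least unfolding U_def by blast
  have uniq: "x = z" if "P x" for x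
  proof -
    have "tleq S x z" using that z unfolding P_def U_def by blast
    moreover have "tleq S z x" using that least unfolding P_def U_def by blast
    ultimately show ?thesis using tleq_antisym[OF wS] by blast
  qed
  have "lca S A = z" unfolding lca_def using the_equality[of P z] Pz uniq unfolding P_def by blast
  then show ?thesis using Pz unfolding P_def by simp
qed

lemma path_change:
  assumes "tleq T a c" "f a \<noteq> s" "f c = s"
  shows "\<exists>d p. tleq T a d \<and> tpar T d = Some p \<and> tleq T p c \<and> f d \<noteq> s \<and> f p = s"
  using assms(1,2) unfolding tleq_rel[of T]
proof (induction rule: converse_rtrancl_induct)
  case base then show ?case using assms(3) by simp
next
  case (step a a1)
  show ?case
  proof (cases "f a1 = s")
    case True
    then show ?thesis using step.hyps step.prems tleq_rel[of T a1 c] by auto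
  next
    case False
    then obtain d p where dp: "tleq T a1 d" "tpar T d = Some p" "tleq T p c" "f d \<noteq> s" "f p = s"
      using step.IH[OF False] unfolding tleq_rel by blast
    have "tleq T a a1" using step.hyps(1) by (simp add: tleq_step)
    then have "tleq T a d" using tleq_trans[OF _ dp(1)] by blast
    then show ?thesis using dp unfolding tleq_rel by blast
  qed
qed

lemma common_W:
  assumes w: "wtree T" and sp: "sepc T W" and a: "a \<in> W" and b: "b \<in> W"
  shows "m \<in> tV T \<Longrightarrow> tleq T a m \<Longrightarrow> tleq T b m \<Longrightarrow> \<exists>z\<in>W. tleq T a z \<and> tleq T b z \<and> tleq T z m"
proof (induction "card (desc T m)" arbitrary: m rule: less_induct)
  case less
  show ?case
  proof (cases "m \<in> W")
    case True then show ?thesis using less.prems by auto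
  next
    case False
    then have "a \<noteq> m" "b \<noteq> m" using a b by auto
    obtain ca where ca: "tpar T ca = Some m" "tleq T a ca" using tleq_cases2[OF less.prems(2) \<open>a \<noteq> m\<close>] by blast
    obtain cb where cb: "tpar T cb = Some m" "tleq T b cb" using tleq_cases2[OF less.prems(3) \<open>b \<noteq> m\<close>] by blast
    have "ca = cb" by (rule sepcD[OF sp less.prems(1) False ca(1) cb(1) a ca(2) b cb(2)])
    then have "\<exists>z\<in>W. tleq T a z \<and> tleq T b z \<and> tleq T z ca"
      using less.hyps[OF desc_child_less[OF w ca(1)] child_tV0[OF ca(1)] ca(2)] cb(2) by blast
    then obtain z where "z \<in> W" "tleq T a z" "tleq T b z" "tleq T z ca" by blast
    moreover have "tleq T z m" using tleq_trans[OF \<open>tleq T z ca\<close> tleq_step[OF ca(1)]] .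
    ultimately show ?thesis by blast
  qed
qed

lemma split_children:
  assumes wT: "wtree T" and wG: "wtree G" and sub: "tV G \<subseteq> tV T" and ag: "agree G T"
    and sp: "sepc T (tV G)" and pa: "tpar G a = Some x" and pb: "tpar G b = Some x" and ab: "a \<noteq> b"
  shows "\<exists>c1 c2. tpar T c1 = Some x \<and> tpar T c2 = Some x \<and> c1 \<noteq> c2 \<and> tleq T a c1 \<and> tleq T b c2"
proof -
  have aG: "a \<in> tV G" by (rule child_tV0[OF pa])
  have bG: "b \<in> tV G" by (rule child_tV0[OF pb])
  have xG: "x \<in> tV G" by (rule wtree_ran[OF wG pa])
  have ax: "tleq T a x" using ag aG xG tleq_step[OF pa] unfolding agree_def by blast
  have bx: "tleq T b x" using ag bG xG tleq_step[OF pb] unfolding agree_def by blast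
  obtain c1 where c1: "tpar T c1 = Some x" "tleq T a c1" using tleq_cases2[OF ax child_ne[OF wG pa]] by blast
  obtain c2 where c2: "tpar T c2 = Some x" "tleq T b c2" using tleq_cases2[OF bx child_ne[OF wG pb]] by blast
  have "c1 \<noteq> c2"
  proof
    assume e: "c1 = c2"
    obtain z where z: "z \<in> tV G" "tleq T a z" "tleq T b z" "tleq T z c1"
      using common_W[OF wT sp aG bG child_tV0[OF c1(1)] c1(2)] c2(2) e by blast
    have zx: "tleq T z x" using tleq_trans[OF z(4) tleq_step[OF c1(1)]] .
    have znx: "z \<noteq> x"
    proof
      assume "z = x"
      then have "tleq T x c1" using z(4) by simp
      then show False using tleq_antisym[OF wT _ tleq_step[OF c1(1)]] child_ne[OF wT c1(1)] by blast
    qed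
    have zxG: "tleq G z x" using ag z(1) xG zx unfolding agree_def by blast
    have "a = z"
    proof (rule ccontr)
      assume "a \<noteq> z"
      moreover have "tleq G a z" using ag z(1) aG z(2) unfolding agree_def by blast
      ultimately have "tleq G x z" using tleq_par[OF _ _ pa] by blast
      then show False using tleq_antisym[OF wG zxG] znx by blast
    qed
    moreover have "b = z"
    proof (rule ccontr)
      assume "b \<noteq> z"
      moreover have "tleq G b z" using ag z(1) bG z(3) unfolding agree_def by blast
      ultimately have "tleq G x z" using tleq_par[OF _ _ pb] by blast
      then show False using tleq_antisym[OF wG zxG] znx by blast
    qed
    ultimately show False using ab by simp
  qed
  then show ?thesis using c1 c2 by blast
qed



lemma dup_impossible:
  assumes tS: "is_tree S" and tG: "is_tree G" and tG2: "is_tree G2" and rch2: "ext_step\<^sup>*\<^sup>* G2 G"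
    and cons2: "consistent G2 S \<rho>2" and lv2: "\<forall>l\<in>leaves G. \<rho>2 l = \<phi> l"
    and eq2: "\<forall>y\<in>tV G. \<rho>2 y = rho_lca G S \<phi> y"
    and min: "\<forall>G3 \<rho>3. dl_reconciliation G G3 S \<phi> \<rho>3 \<and> (\<forall>y\<in>tV G. \<rho>3 y = rho_lca G S \<phi> y) \<longrightarrow>
        card (losses G G2) \<le> card (losses G G3)"
    and xG: "x \<in> tV G" and xnr: "x \<noteq> troot G"
    and pa: "tpar G a = Some x" and pb: "tpar G b = Some x" and ab: "a \<noteq> b"
    and chG: "children G x = {a, b}"
    and pt1: "tpar S t1 = Some s" and pt2: "tpar S t2 = Some s" and t12: "t1 \<noteq> t2"
    and tt: "children S s = {t1, t2}"
    and ra: "tleq S (\<rho>2 a) t1" and rb: "tleq S (\<rho>2 b) t2"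
    and rx: "\<rho>2 x = s"
    and dup: "is_dup G2 S \<rho>2 x"
  shows False
proof -
  have wS: "wtree S" by (rule is_tree_wtree[OF tS])
  have wG: "wtree G" by (rule is_tree_wtree[OF tG])
  have wG2: "wtree G2" by (rule is_tree_wtree[OF tG2])
  have rf: "troot G = troot G2 \<and> tV G \<subseteq> tV G2 \<and> agree G G2 \<and> sepc G2 (tV G) \<and> wtree G"
    by (rule reach_fwd[OF rch2 wG2])
  then have rt2: "troot G = troot G2" and sub2: "tV G \<subseteq> tV G2" and ag2: "agree G G2"
    and sp2: "sepc G2 (tV G)" by blast+
  have aG: "a \<in> tV G" by (rule child_tV0[OF pa])
  have bG: "b \<in> tV G" by (rule child_tV0[OF pb])
  obtain c1 c2 where cc: "tpar G2 c1 = Some x" "tpar G2 c2 = Some x" "c1 \<noteq> c2" "tleq G2 a c1" "tleq G2 b c2"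
    using split_children[OF wG2 wG sub2 ag2 sp2 pa pb ab] by blast
  have xV2: "x \<in> tV G2" using xG sub2 by blast
  have xnr2: "x \<noteq> troot G2" using xnr rt2 by simp
  have c1in: "c1 \<in> children G2 x" using cc(1) by (simp add: children_def)
  have c2in: "c2 \<in> children G2 x" using cc(2) by (simp add: children_def)
  have rc1: "\<rho>2 c1 = s" using dup c1in rx unfolding is_dup_def by blast
  have rc2: "\<rho>2 c2 = s" using dup c2in rx unfolding is_dup_def by blast
  have s_ne_t1: "s \<noteq> t1" using child_ne[OF wS pt1] by simp
  have s_ne_t2: "s \<noteq> t2" using child_ne[OF wS pt2] by simp
  have ra_ne: "\<rho>2 a \<noteq> s"
  proof
    assume "\<rho>2 a = s"
    then have "tleq S s t1" using ra by simp
    then show False using tleq_antisym[OF wS _ tleq_step[OF pt1]] s_ne_t1 by blast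
  qed
  have rb_ne: "\<rho>2 b \<noteq> s"
  proof
    assume "\<rho>2 b = s"
    then have "tleq S s t2" using rb by simp
    then show False using tleq_antisym[OF wS _ tleq_step[OF pt2]] s_ne_t2 by blast
  qed
  obtain d p where dp: "tleq G2 a d" "tpar G2 d = Some p" "tleq G2 p c1" "\<rho>2 d \<noteq> s" "\<rho>2 p = s"
    using path_change[of G2 a c1 \<rho>2 s, OF cc(4) ra_ne rc1] by blast
  obtain e q where eq: "tleq G2 b e" "tpar G2 e = Some q" "tleq G2 q c2" "\<rho>2 e \<noteq> s" "\<rho>2 q = s"
    using path_change[of G2 b c2 \<rho>2 s, OF cc(5) rb_ne rc2] by blast
  have c1x: "tleq G2 c1 x" by (rule tleq_step[OF cc(1)])
  have c2x: "tleq G2 c2 x" by (rule tleq_step[OF cc(2)])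
  have dc1: "tleq G2 d c1" using tleq_trans[OF tleq_step[OF dp(2)] dp(3)] .
  have ec2: "tleq G2 e c2" using tleq_trans[OF tleq_step[OF eq(2)] eq(3)] .
  have dx: "tleq G2 d x" using tleq_trans[OF dc1 c1x] .
  have ex: "tleq G2 e x" using tleq_trans[OF ec2 c2x] .
  have px: "tleq G2 p x" using tleq_trans[OF dp(3) c1x] .
  have qx: "tleq G2 q x" using tleq_trans[OF eq(3) c2x] .
  have sep: "\<not> (tleq G2 y c1 \<and> tleq G2 y c2)" for y
    using siblings_disjoint[OF wG2 cc(1) cc(2) cc(3)] by blast
  have F2: "\<not> (tleq G2 y d \<and> tleq G2 y e)" for y
    using sep[of y] tleq_trans[OF _ dc1, of y] tleq_trans[OF _ ec2, of y] by blast
  have nde: "\<not> tleq G2 d e" using F2[of d] tleq_refl[of G2 d] by blast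
  have ned: "\<not> tleq G2 e d" using F2[of e] tleq_refl[of G2 e] by blast
  have nxc1: "\<not> tleq G2 x c1"
    using tleq_antisym[OF wG2 _ c1x] child_ne[OF wG2 cc(1)] by blast
  have nxc2: "\<not> tleq G2 x c2"
    using tleq_antisym[OF wG2 _ c2x] child_ne[OF wG2 cc(2)] by blast
  have xnd: "x \<noteq> d" using nxc1 dc1 by blast
  have xne: "x \<noteq> e" using nxc2 ec2 by blast
  have xnp: "x \<noteq> p" using nxc1 dp(3) by blast
  have xnq: "x \<noteq> q" using nxc2 eq(3) by blast
  have pV: "p \<in> tV G2" by (rule wtree_ran[OF wG2 dp(2)])
  have qV: "q \<in> tV G2" by (rule wtree_ran[OF wG2 eq(2)])
  have dV: "d \<in> tV G2" by (rule child_tV0[OF dp(2)])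
  have eV: "e \<in> tV G2" by (rule child_tV0[OF eq(2)])
  have rootx: "\<not> tleq G2 (troot G2) x"
    using tleq_antisym[OF wG2 _ wtree_reach[OF wG2 xV2]] xnr2 by blast
  have pnr: "p \<noteq> troot G2" using rootx px by blast
  have qnr: "q \<noteq> troot G2" using rootx qx by blast
  have cp2: "card (children G2 p) = 2" by (rule is_tree_card2[OF tG2 pV pnr dp(2)])
  have cq2: "card (children G2 q) = 2" by (rule is_tree_card2[OF tG2 qV qnr eq(2)])
  have din: "d \<in> children G2 p" using dp(2) by (simp add: children_def)
  have ein: "e \<in> children G2 q" using eq(2) by (simp add: children_def)
  have rd: "\<rho>2 d \<in> children S s"
  proof -
    have "is_dup G2 S \<rho>2 p \<or> is_spec G2 S \<rho>2 p" using cons2 pV cp2 unfolding consistent_def by blast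
    moreover have "\<not> is_dup G2 S \<rho>2 p" using din dp(4) dp(5) unfolding is_dup_def by auto
    ultimately have "is_spec G2 S \<rho>2 p" by blast
    then show ?thesis using din dp(5) unfolding is_spec_def by blast
  qed
  have re: "\<rho>2 e \<in> children S s"
  proof -
    have "is_dup G2 S \<rho>2 q \<or> is_spec G2 S \<rho>2 q" using cons2 qV cq2 unfolding consistent_def by blast
    moreover have "\<not> is_dup G2 S \<rho>2 q" using ein eq(4) eq(5) unfolding is_dup_def by auto
    ultimately have "is_spec G2 S \<rho>2 q" by blast
    then show ?thesis using ein eq(5) unfolding is_spec_def by blast
  qed
  have rd1: "\<rho>2 d = t1"
  proof -
    have "\<rho>2 d = t1 \<or> \<rho>2 d = t2" using rd tt by blast
    moreover have "tleq S (\<rho>2 a) (\<rho>2 d)" by (rule cons_mono[OF tG2 wS cons2 dp(1)])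
    ultimately show ?thesis using siblings_disjoint[OF wS pt1 pt2 t12 ra] by blast
  qed
  have re2: "\<rho>2 e = t2"
  proof -
    have "\<rho>2 e = t1 \<or> \<rho>2 e = t2" using re tt by blast
    moreover have "tleq S (\<rho>2 b) (\<rho>2 e)" by (rule cons_mono[OF tG2 wS cons2 eq(1)])
    ultimately show ?thesis using siblings_disjoint[OF wS pt1 pt2 t12 _ rb] by blast
  qed
  have dne: "d \<noteq> e" using rd1 re2 t12 by auto
  obtain q' where q': "q' \<in> children G2 p" "q' \<noteq> d"
  proof -
    have "children G2 p \<noteq> {d}" using cp2 by auto
    then show ?thesis using that din by blast
  qed
  have pq': "tpar G2 q' = Some p" using q'(1) by (simp add: children_def)
  obtain l where l: "l \<in> leaves G2" "tleq G2 l q'"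
    using leaf_below[OF wG2 child_tV0[OF pq']] by blast
  have ad: "tleq G2 a d" by (rule dp(1))
  have be: "tleq G2 b e" by (rule eq(1))

  define Rem where "Rem = {y \<in> tV G2. tleq G2 y x \<and> y \<noteq> x \<and> \<not> tleq G2 y d \<and> \<not> tleq G2 y e}"
  define V3 where "V3 = tV G2 - Rem"
  define tp3 where "tp3 y = (if y \<in> Rem then None else if y = d \<or> y = e then Some x else tpar G2 y)" for y
  define G3 where "G3 = (troot G2, tp3)"
  have notRem: "y \<in> tV G2 \<Longrightarrow> tleq G2 y x \<Longrightarrow> y \<noteq> x \<Longrightarrow> y \<notin> Rem \<Longrightarrow> tleq G2 y d \<or> tleq G2 y e" for y
    unfolding Rem_def by blast
  have xR: "x \<notin> Rem" unfolding Rem_def by blast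
  have dR: "d \<notin> Rem" unfolding Rem_def using tleq_refl[of G2 d] by blast
  have eR: "e \<notin> Rem" unfolding Rem_def using tleq_refl[of G2 e] by blast
  have rootR: "troot G2 \<notin> Rem" using rootx unfolding Rem_def by blast
  have pR: "p \<in> Rem"
  proof -
    have "\<not> tleq G2 p d"
      using tleq_antisym[OF wG2 _ tleq_step[OF dp(2)]] child_ne[OF wG2 dp(2)] by blast
    moreover have "\<not> tleq G2 p e" using nde tleq_trans[OF tleq_step[OF dp(2)], of e] by blast
    ultimately show ?thesis unfolding Rem_def using pV px xnp by blast
  qed
  have qR: "q \<in> Rem"
  proof -
    have "\<not> tleq G2 q e"
      using tleq_antisym[OF wG2 _ tleq_step[OF eq(2)]] child_ne[OF wG2 eq(2)] by blast
    moreover have "\<not> tleq G2 q d" using ned tleq_trans[OF tleq_step[OF eq(2)], of d] by blast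
    ultimately show ?thesis unfolding Rem_def using qV qx xnq by blast
  qed
  have GR: "g \<notin> Rem" if g: "g \<in> tV G" for g
  proof
    assume gR: "g \<in> Rem"
    then have "tleq G2 g x" "g \<noteq> x" unfolding Rem_def by blast+
    then have gxG: "tleq G g x" using ag2 g xG unfolding agree_def by blast
    obtain h where h: "tpar G h = Some x" "tleq G g h" using tleq_cases2[OF gxG \<open>g \<noteq> x\<close>] by blast
    have "h \<in> children G x" using h(1) by (simp add: children_def)
    then have "h = a \<or> h = b" using chG by auto
    then show False
    proof
      assume "h = a"
      then have "tleq G2 g a" using ag2 g aG h(2) unfolding agree_def by blast
      then have "tleq G2 g d" using tleq_trans[OF _ ad] by blast
      then show False using gR unfolding Rem_def by blast
    next
      assume "h = b"
      then have "tleq G2 g b" using ag2 g bG h(2) unfolding agree_def by blast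
      then have "tleq G2 g e" using tleq_trans[OF _ be] by blast
      then show False using gR unfolding Rem_def by blast
    qed
  qed
  have lV: "l \<in> tV G2" using l(1) unfolding leaves_def by blast
  have lq: "tleq G2 l p" using tleq_trans[OF l(2) tleq_step[OF pq']] .
  have lc1: "tleq G2 l c1" using tleq_trans[OF lq dp(3)] .
  have lR: "l \<in> Rem"
  proof -
    have "tleq G2 l x" using tleq_trans[OF lc1 c1x] .
    moreover have "l \<noteq> x" using lc1 nxc1 by blast
    moreover have "\<not> tleq G2 l d" using siblings_disjoint[OF wG2 pq' dp(2) q'(2) l(2)] by blast
    moreover have "\<not> tleq G2 l e" using sep[of l] lc1 tleq_trans[OF _ ec2, of l] by blast
    ultimately show ?thesis unfolding Rem_def using lV by blast
  qed
  have lG: "l \<notin> tV G" using GR lR by blast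

  have V3sub: "V3 \<subseteq> tV G2" unfolding V3_def by blast
  have rootV3: "troot G2 \<in> V3" unfolding V3_def using rootR by simp
  have xV3: "x \<in> V3" unfolding V3_def using xV2 xR by simp
  have GV3: "tV G \<subseteq> V3" unfolding V3_def using sub2 GR by blast
  have domG2: "dom (tpar G2) = tV G2 - {troot G2}"
    using wtree_root[OF wG2] unfolding tV_def by auto
  have tp3_troot: "troot G3 = troot G2" "tpar G3 = tp3" unfolding G3_def by simp_all

  have par3: "z \<in> V3 \<and> tleq G2 y z \<and> y \<noteq> z \<and> (\<forall>w\<in>V3. tleq G2 y w \<and> y \<noteq> w \<longrightarrow> tleq G2 z w)"
    if yz: "tp3 y = Some z" for y z
  proof -
    have yR: "y \<notin> Rem" using yz unfolding tp3_def by (auto split: if_splits)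
    show ?thesis
    proof (cases "y = d \<or> y = e")
      case True
      then have z: "z = x" using yz yR unfolding tp3_def by auto
      have yx: "tleq G2 y x" using True dx ex by blast
      have ynx: "y \<noteq> x" using True xnd xne by blast
      have "\<forall>w\<in>V3. tleq G2 y w \<and> y \<noteq> w \<longrightarrow> tleq G2 x w"
      proof (intro ballI impI)
        fix w assume wV: "w \<in> V3" and yw: "tleq G2 y w \<and> y \<noteq> w"
        have "tleq G2 x w \<or> tleq G2 w x" using tleq_chain[of G2 y x w] yx yw by blast
        then show "tleq G2 x w"
        proof
          assume wx: "tleq G2 w x"
          show ?thesis
          proof (rule ccontr)
            assume nxw: "\<not> tleq G2 x w"
            then have "w \<noteq> x" by auto
            then have "tleq G2 w d \<or> tleq G2 w e" using notRem[of w] wV wx unfolding V3_def by blast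
            then show False
            proof
              assume wd: "tleq G2 w d"
              show False
              proof (cases "y = d")
                case True
                then show False using tleq_antisym[OF wG2 wd] yw by blast
              next
                case False
                then have "y = e" using \<open>y = d \<or> y = e\<close> by blast
                then show False using ned tleq_trans[OF _ wd, of e] yw by blast
              qed
            next
              assume we: "tleq G2 w e"
              show False
              proof (cases "y = e")
                case True
                then show False using tleq_antisym[OF wG2 we] yw by blast
              next
                case False
                then have "y = d" using \<open>y = d \<or> y = e\<close> by blast
                then show False using nde tleq_trans[OF _ we, of d] yw by blast
              qed
            qed
          qed
        qed simp
      qed
      then show ?thesis using z xV3 yx ynx by blast
    next
      case False
      then have yz2: "tpar G2 y = Some z" using yz yR unfolding tp3_def by auto
      have yV: "y \<in> tV G2" by (rule child_tV0[OF yz2])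
      have zV: "z \<in> tV G2" by (rule wtree_ran[OF wG2 yz2])
      have zR: "z \<notin> Rem"
      proof
        assume zR: "z \<in> Rem"
        then have zx: "tleq G2 z x" "z \<noteq> x" "\<not> tleq G2 z d" "\<not> tleq G2 z e" unfolding Rem_def by blast+
        have yx: "tleq G2 y x" using tleq_trans[OF tleq_step[OF yz2] zx(1)] .
        have ynx: "y \<noteq> x"
        proof
          assume "y = x"
          then have "tleq G2 x z" using tleq_step[OF yz2] by simp
          then show False using tleq_antisym[OF wG2 _ zx(1)] zx(2) by blast
        qed
        have "tleq G2 y d \<or> tleq G2 y e" using notRem[OF yV yx ynx yR] .
        then show False
        proof
          assume "tleq G2 y d"
          then have "tleq G2 z d" using tleq_par[OF _ _ yz2] False by blast
          then show False using zx(3) by blast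
        next
          assume "tleq G2 y e"
          then have "tleq G2 z e" using tleq_par[OF _ _ yz2] False by blast
          then show False using zx(4) by blast
        qed
      qed
      have "z \<in> V3" unfolding V3_def using zV zR by blast
      moreover have "tleq G2 y z" by (rule tleq_step[OF yz2])
      moreover have "y \<noteq> z" by (rule child_ne[OF wG2 yz2])
      moreover have "\<forall>w\<in>V3. tleq G2 y w \<and> y \<noteq> w \<longrightarrow> tleq G2 z w"
        using tleq_par[where p=z, OF _ _ yz2] by blast
      ultimately show ?thesis by blast
    qed
  qed
  have dom3: "dom tp3 = V3 - {troot G2}"
  proof
    show "dom tp3 \<subseteq> V3 - {troot G2}"
    proof
      fix y assume "y \<in> dom tp3"
      then obtain z where yz: "tp3 y = Some z" by blast
      then have yR: "y \<notin> Rem" unfolding tp3_def by (auto split: if_splits)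
      have "y \<in> dom (tpar G2)"
      proof (cases "y = d \<or> y = e")
        case True then show ?thesis using dp(2) eq(2) by blast
      next
        case False then have "tpar G2 y = Some z" using yz yR unfolding tp3_def by auto
        then show ?thesis by blast
      qed
      then show "y \<in> V3 - {troot G2}" using domG2 yR unfolding V3_def by blast
    qed
  next
    show "V3 - {troot G2} \<subseteq> dom tp3"
    proof
      fix y assume y: "y \<in> V3 - {troot G2}"
      then have yR: "y \<notin> Rem" and "y \<in> dom (tpar G2)" using domG2 unfolding V3_def by blast+
      then obtain z where "tpar G2 y = Some z" by blast
      then show "y \<in> dom tp3" using yR unfolding tp3_def by (cases "y = d \<or> y = e") auto
    qed
  qed
  have rst3: "rst G2 G3 V3"
    unfolding rst_def tp3_troot using dom3 par3 by blast
  have wG3: "wtree G3" by (rule rst_wtree[OF wG2 rst3 V3sub rootV3])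
  have tv3: "tV G3 = V3" by (rule rst_tV[OF rst3 rootV3])
  have ag3: "tleq G3 u v \<longleftrightarrow> tleq G2 u v" if "u \<in> V3" "v \<in> V3" for u v
    by (rule rst_iff[OF wG2 rst3 V3sub rootV3 that])
  have ch3: "children G3 y = children G2 y" if yV: "y \<in> V3" and yx: "y \<noteq> x" for y
  proof -
    have "tp3 c = Some y \<longleftrightarrow> tpar G2 c = Some y" for c
    proof
      assume h: "tp3 c = Some y"
      then have cR: "c \<notin> Rem" unfolding tp3_def by (auto split: if_splits)
      have "\<not> (c = d \<or> c = e)"
      proof
        assume "c = d \<or> c = e"
        then have "tp3 c = Some x" using cR unfolding tp3_def by auto
        then show False using h yx by simp
      qed
      then show "tpar G2 c = Some y" using h cR unfolding tp3_def by auto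
    next
      assume h: "tpar G2 c = Some y"
      have cR: "c \<notin> Rem"
      proof
        assume cR: "c \<in> Rem"
        then have cx: "tleq G2 c x" "c \<noteq> x" "\<not> tleq G2 c d" "\<not> tleq G2 c e" unfolding Rem_def by blast+
        have yx2: "tleq G2 y x" using tleq_par[OF cx(1) cx(2) h] .
        have yV2: "y \<in> tV G2" using yV V3sub by blast
        have yR: "y \<notin> Rem" using yV unfolding V3_def by blast
        have "tleq G2 y d \<or> tleq G2 y e" using notRem[OF yV2 yx2 yx yR] .
        then show False using cx(3,4) tleq_trans[OF tleq_step[OF h]] by blast
      qed
      have "c \<noteq> d"
      proof
        assume "c = d"
        then have "y = p" using h dp(2) by simp
        then show False using pR yV unfolding V3_def by blast
      qed
      moreover have "c \<noteq> e"
      proof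
        assume "c = e"
        then have "y = q" using h eq(2) by simp
        then show False using qR yV unfolding V3_def by blast
      qed
      ultimately show "tp3 c = Some y" using h cR unfolding tp3_def by auto
    qed
    then show ?thesis unfolding children_def tp3_troot by blast
  qed
  have ch3x: "children G3 x = {d, e}"
  proof -
    have "tp3 c = Some x \<longleftrightarrow> c = d \<or> c = e" for c
    proof
      assume h: "tp3 c = Some x"
      then have cR: "c \<notin> Rem" unfolding tp3_def by (auto split: if_splits)
      show "c = d \<or> c = e"
      proof (rule ccontr)
        assume nde: "\<not> (c = d \<or> c = e)"
        then have pc: "tpar G2 c = Some x" using h cR unfolding tp3_def by auto
        have "tleq G2 c d \<or> tleq G2 c e"
          using notRem[OF child_tV0[OF pc] tleq_step[OF pc] child_ne[OF wG2 pc] cR] .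
        then show False
        proof
          assume "tleq G2 c d"
          then have "tleq G2 x d" using tleq_par[OF _ _ pc] nde by blast
          then show False using tleq_antisym[OF wG2 _ dx] xnd by blast
        next
          assume "tleq G2 c e"
          then have "tleq G2 x e" using tleq_par[OF _ _ pc] nde by blast
          then show False using tleq_antisym[OF wG2 _ ex] xne by blast
        qed
      qed
    next
      assume "c = d \<or> c = e"
      then show "tp3 c = Some x" using dR eR unfolding tp3_def by auto
    qed
    then show ?thesis unfolding children_def tp3_troot by blast
  qed
  have card3x: "card (children G3 x) = 2" using ch3x dne by simp
  have tG3: "is_tree G3"
  proof -
    have a1: "finite (dom (tpar G3)) \<and> troot G3 \<notin> dom (tpar G3) \<and> ran (tpar G3) \<subseteq> tV G3 \<and>
      (\<forall>y\<in>tV G3. tleq G3 y (troot G3))" using wG3 unfolding wtree_def by blast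
    have rx3: "troot G2 \<noteq> x" using xnr2 by simp
    have a2: "card (children G3 (troot G3)) = 1"
      using ch3[OF rootV3 rx3] is_tree_root_card[OF tG2] tp3_troot by simp
    have a3: "\<forall>y\<in>tV G3 - {troot G3}. card (children G3 y) = 0 \<or> card (children G3 y) = 2"
    proof
      fix y assume y: "y \<in> tV G3 - {troot G3}"
      show "card (children G3 y) = 0 \<or> card (children G3 y) = 2"
      proof (cases "y = x")
        case True then show ?thesis using card3x by simp
      next
        case False
        have yV3: "y \<in> V3" using y tv3 by blast
        have "card (children G2 y) = 0 \<or> card (children G2 y) = 2"
          by (rule is_tree_card[OF tG2]) (use yV3 V3sub y tp3_troot in auto)
        then show ?thesis using ch3[OF yV3 False] by simp
      qed
    qed
    show ?thesis unfolding is_tree_def using a1 a2 a3 by blast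
  qed
  have sp3: "sepc G3 (tV G)"
    unfolding sepc_def
  proof (intro ballI allI impI)
    fix y c1' c2'
    assume y: "y \<in> tV G3 - tV G" and p1: "tpar G3 c1' = Some y" and p2: "tpar G3 c2' = Some y"
      and e1: "\<exists>w\<in>tV G. tleq G3 w c1'" and e2: "\<exists>w\<in>tV G. tleq G3 w c2'"
    have yx: "y \<noteq> x" using y xG by blast
    have yV3: "y \<in> V3" using y tv3 by blast
    have q1: "tpar G2 c1' = Some y" using p1 ch3[OF yV3 yx] unfolding children_def by blast
    have q2: "tpar G2 c2' = Some y" using p2 ch3[OF yV3 yx] unfolding children_def by blast
    obtain w1 where w1: "w1 \<in> tV G" "tleq G3 w1 c1'" using e1 by blast
    obtain w2 where w2: "w2 \<in> tV G" "tleq G3 w2 c2'" using e2 by blast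
    show "c1' = c2'"
      by (rule sepcD[OF sp2 _ _ q1 q2 w1(1) rst_fwd[OF rst3 w1(2)] w2(1) rst_fwd[OF rst3 w2(2)]])
        (use y V3sub tv3 in auto)
  qed
  have ag3G: "agree G G3"
    unfolding agree_def
  proof (intro ballI)
    fix u v assume "u \<in> tV G" "v \<in> tV G"
    then show "tleq G u v \<longleftrightarrow> tleq G3 u v"
      using ag2 ag3 GV3 unfolding agree_def by blast
  qed
  have ext3: "ext_step\<^sup>*\<^sup>* G3 G"
    by (rule reach_bwd[OF wG wG3]) (use rt2 tp3_troot tv3 GV3 ag3G sp3 in auto)
  have cons3: "consistent G3 S \<rho>2"
    unfolding consistent_def
  proof (intro conjI ballI impI)
    show "\<rho>2 (troot G3) = troot S" using cons2 tp3_troot unfolding consistent_def by simp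
  next
    fix y assume "y \<in> tV G3"
    then show "\<rho>2 y \<in> tV S" using cons2 tv3 V3sub unfolding consistent_def by blast
  next
    fix y assume yV: "y \<in> tV G3" and c2: "card (children G3 y) = 2"
    show "is_dup G3 S \<rho>2 y \<or> is_spec G3 S \<rho>2 y"
    proof (cases "y = x")
      case True
      have "\<rho>2 ` children G3 x = children S s" using ch3x rd1 re2 tt by auto
      moreover have "card (children S s) = 2" using tt t12 by simp
      ultimately have "is_spec G3 S \<rho>2 x" unfolding is_spec_def using card3x rx by simp
      then show ?thesis using True by blast
    next
      case False
      have yV3: "y \<in> V3" using yV tv3 by blast
      have "is_dup G2 S \<rho>2 y \<or> is_spec G2 S \<rho>2 y"
        using cons2 yV3 V3sub c2 ch3[OF yV3 False] unfolding consistent_def by auto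
      then show ?thesis unfolding is_dup_def is_spec_def using ch3[OF yV3 False] by simp
    qed
  qed
  have dl3: "dl_reconciliation G G3 S \<phi> \<rho>2"
    unfolding dl_reconciliation_def is_extension_def using tS tG3 tG ext3 cons3 lv2 by blast
  have le: "card (losses G G2) \<le> card (losses G G3)" using min dl3 eq2 by blast
  have leaves3: "leaves G3 \<subseteq> leaves G2"
  proof
    fix y assume y: "y \<in> leaves G3"
    then have yV3: "y \<in> V3" and e: "children G3 y = {}" using tv3 unfolding leaves_def by blast+
    have "y \<noteq> x" using e ch3x by auto
    then have "children G2 y = {}" using ch3[OF yV3] e by simp
    then show "y \<in> leaves G2" using yV3 V3sub unfolding leaves_def by blast
  qed
  have "losses G G3 \<subset> losses G G2"
  proof -
    have "losses G G3 \<subseteq> losses G G2" unfolding losses_def using leaves3 by blast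
    moreover have "l \<in> losses G G2" unfolding losses_def using l(1) lG unfolding leaves_def by blast
    moreover have "l \<notin> losses G G3" unfolding losses_def leaves_def using lR tv3 V3_def by blast
    ultimately show ?thesis by blast
  qed
  moreover have "finite (losses G G2)"
    using wtree_finite[OF wG2] unfolding losses_def leaves_def by (rule finite_subset[rotated]) blast
  ultimately have "card (losses G G3) < card (losses G G2)" by (rule psubset_card_mono[rotated])
  then show False using le by simp
qed



theorem lemma9:
  fixes G G' :: "'a tree" and S :: "'b tree" and \<phi> \<rho> :: "'a \<Rightarrow> 'b" and \<delta> :: "'a \<rightharpoonup> 'a"
  assumes "standing G S \<phi>"
    and "reconciliation G G' S \<phi> \<rho> \<delta>"
    and "x \<in> tV G"
    and "x \<in> Sigma G' S \<rho>"
  shows "(\<forall>G2 \<rho>2. lca_reconciliation G G2 S \<phi> \<rho>2 \<longrightarrow> x \<in> Sigma G2 S \<rho>2)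
         \<and> \<rho> x = rho_lca G S \<phi> x"
proof -
  note st = assms(1) and xG = assms(3)
  have dl: "dl_reconciliation G G' S \<phi> \<rho>" using assms(2) unfolding reconciliation_def by blast
  have tS: "is_tree S" and tG': "is_tree G'" and tG: "is_tree G" and rch: "ext_step\<^sup>*\<^sup>* G' G"
    and cons: "consistent G' S \<rho>" and lv: "\<forall>l\<in>leaves G. \<rho> l = \<phi> l"
    using dl unfolding dl_reconciliation_def is_extension_def by blast+
  have wS: "wtree S" by (rule is_tree_wtree[OF tS])
  have wG': "wtree G'" by (rule is_tree_wtree[OF tG'])
  have wG: "wtree G" by (rule is_tree_wtree[OF tG])
  have rf: "troot G = troot G' \<and> tV G \<subseteq> tV G' \<and> agree G G' \<and> sepc G' (tV G) \<and> wtree G"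
    by (rule reach_fwd[OF rch wG'])
  then have rt: "troot G = troot G'" and sub: "tV G \<subseteq> tV G'" and ag: "agree G G'"
    and sp: "sepc G' (tV G)" by blast+
  have xs: "x \<in> tV G'" "is_spec G' S \<rho> x" using assms(4) unfolding Sigma_def by blast+
  define s where "s = \<rho> x"
  have chx: "card (children G' x) = 2" "card (children S s) = 2" "\<rho> ` children G' x = children S s"
    using xs(2) unfolding is_spec_def s_def by blast+
  have xnr: "x \<noteq> troot G"
  proof
    assume "x = troot G"
    then have "s = troot S" using cons rt unfolding consistent_def s_def by simp
    then show False using chx(2) is_tree_root_card[OF tS] by simp
  qed
  have xnl: "x \<notin> leaves G"
  proof
    assume xl: "x \<in> leaves G"
    then have "s = \<phi> x" using lv s_def by simp
    moreover have "\<phi> x \<in> leaves S" using st xl unfolding standing_def by blast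
    ultimately have "children S s = {}" unfolding leaves_def by simp
    then show False using chx(2) by simp
  qed
  have "children G x \<noteq> {}" using xnl xG unfolding leaves_def by blast
  then obtain c where "tpar G c = Some x" unfolding children_def by blast
  then have "card (children G x) = 2" by (rule is_tree_card2[OF tG xG xnr])
  then obtain a b where ab: "a \<noteq> b" "children G x = {a, b}" by (auto simp: card_2_iff)
  have "a \<in> children G x" "b \<in> children G x" using ab(2) by simp_all
  then have pa: "tpar G a = Some x" and pb: "tpar G b = Some x" by (simp_all add: children_def)
  have aG: "a \<in> tV G" by (rule child_tV0[OF pa])
  have bG: "b \<in> tV G" by (rule child_tV0[OF pb])
  obtain c1' c2' where cc: "tpar G' c1' = Some x" "tpar G' c2' = Some x" "c1' \<noteq> c2'"
    "tleq G' a c1'" "tleq G' b c2'"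
    using split_children[OF wG' wG sub ag sp pa pb ab(1)] by blast
  have chG': "children G' x = {c1', c2'}"
  proof -
    have "{c1', c2'} \<subseteq> children G' x" using cc by (simp add: children_def)
    moreover have "card {c1', c2'} = card (children G' x)" using chx(1) cc(3) by simp
    ultimately show ?thesis using card_subset_eq[OF children_finite[OF wG']] by metis
  qed
  define t1 where "t1 = \<rho> c1'"
  define t2 where "t2 = \<rho> c2'"
  have tt: "children S s = {t1, t2}" using chx(3) chG' t1_def t2_def by auto
  have t12: "t1 \<noteq> t2"
  proof
    assume "t1 = t2"
    then have "children S s = {t1}" using tt by simp
    then show False using chx(2) by simp
  qed
  have "t1 \<in> children S s" "t2 \<in> children S s" using tt by simp_all
  then have pt1: "tpar S t1 = Some s" and pt2: "tpar S t2 = Some s" by (simp_all add: children_def)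
  have t1V: "t1 \<in> tV S" by (rule child_tV0[OF pt1])
  have t2V: "t2 \<in> tV S" by (rule child_tV0[OF pt2])
  have sV: "s \<in> tV S" by (rule wtree_ran[OF wS pt1])
  define L where "L y = \<phi> ` {l \<in> leaves G. tleq G l y}" for y
  have LV: "L y \<subseteq> tV S" for y
    using st unfolding L_def standing_def leaves_def by blast
  have Lne: "L y \<noteq> {}" if "y \<in> tV G" for y
    using leaf_below[OF wG that] unfolding L_def by blast
  have ub: "tleq S e (\<rho> c)" if y: "y \<in> tV G" and yc: "tleq G' y c" and e: "e \<in> L y" for y c e
  proof -
    obtain l where l: "l \<in> leaves G" "tleq G l y" "e = \<phi> l" using e unfolding L_def by blast
    have lG: "l \<in> tV G" using l(1) unfolding leaves_def by blast
    have "tleq G' l y" using ag lG y l(2) unfolding agree_def by blast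
    then have "tleq G' l c" using tleq_trans[OF _ yc] by blast
    then have "tleq S (\<rho> l) (\<rho> c)" by (rule cons_mono[OF tG' wS cons])
    then show ?thesis using l(1,3) lv by simp
  qed
  have lcaP: "rho_lca G S \<phi> y \<in> tV S \<and> (\<forall>e\<in>L y. tleq S e (rho_lca G S \<phi> y)) \<and>
      (\<forall>z\<in>tV S. (\<forall>e\<in>L y. tleq S e z) \<longrightarrow> tleq S (rho_lca G S \<phi> y) z)" if "y \<in> tV G" for y
    using lca_props[OF wS LV Lne[OF that]] unfolding rho_lca_def L_def by blast
  have lca_a: "tleq S (rho_lca G S \<phi> a) t1"
    using lcaP[OF aG] ub[OF aG cc(4)] t1V t1_def by blast
  have lca_b: "tleq S (rho_lca G S \<phi> b) t2"
    using lcaP[OF bG] ub[OF bG cc(5)] t2V t2_def by blast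
  define lam where "lam = rho_lca G S \<phi> x"
  have lx: "tleq S lam s"
    using lcaP[OF xG] ub[OF xG tleq_refl[of G' x]] sV s_def lam_def by blast
  obtain la where la: "la \<in> leaves G" "tleq G la a" using leaf_below[OF wG aG] by blast
  obtain lb where lb': "lb \<in> leaves G" "tleq G lb b" using leaf_below[OF wG bG] by blast
  have ax: "tleq G a x" by (rule tleq_step[OF pa])
  have bx: "tleq G b x" by (rule tleq_step[OF pb])
  have laL: "\<phi> la \<in> L a" "\<phi> la \<in> L x"
    using la tleq_trans[OF la(2) ax] unfolding L_def by blast+
  have lbL: "\<phi> lb \<in> L b" "\<phi> lb \<in> L x"
    using lb' tleq_trans[OF lb'(2) bx] unfolding L_def by blast+
  have la1: "tleq S (\<phi> la) t1" using ub[OF aG cc(4) laL(1)] t1_def by simp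
  have lb2: "tleq S (\<phi> lb) t2" using ub[OF bG cc(5) lbL(1)] t2_def by simp
  have lal: "tleq S (\<phi> la) lam" using lcaP[OF xG] laL(2) lam_def by blast
  have lbl: "tleq S (\<phi> lb) lam" using lcaP[OF xG] lbL(2) lam_def by blast
  have notle: "\<not> tleq S lam t1"
  proof
    assume "tleq S lam t1"
    then have "tleq S (\<phi> lb) t1" using tleq_trans[OF lbl] by blast
    then show False using siblings_disjoint[OF wS pt1 pt2 t12 _ lb2] by blast
  qed
  have "tleq S t1 lam \<or> tleq S lam t1" by (rule tleq_chain[OF la1 lal])
  then have "tleq S t1 lam" using notle by blast
  moreover have "t1 \<noteq> lam" using notle by auto
  ultimately have "tleq S s lam" using tleq_par[OF _ _ pt1] by blast
  then have lams: "lam = s" using tleq_antisym[OF wS lx] by blast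
  have part2: "\<rho> x = rho_lca G S \<phi> x" using lams lam_def s_def by simp
  have part1: "\<forall>G2 \<rho>2. lca_reconciliation G G2 S \<phi> \<rho>2 \<longrightarrow> x \<in> Sigma G2 S \<rho>2"
  proof (intro allI impI)
    fix G2 \<rho>2 assume lr: "lca_reconciliation G G2 S \<phi> \<rho>2"
    have dl2: "dl_reconciliation G G2 S \<phi> \<rho>2" and eq2: "\<forall>y\<in>tV G. \<rho>2 y = rho_lca G S \<phi> y"
      and min: "\<forall>G3 \<rho>3. dl_reconciliation G G3 S \<phi> \<rho>3 \<and> (\<forall>y\<in>tV G. \<rho>3 y = rho_lca G S \<phi> y) \<longrightarrow>
        card (losses G G2) \<le> card (losses G G3)"
      using lr unfolding lca_reconciliation_def by blast+
    have tG2: "is_tree G2" and rch2: "ext_step\<^sup>*\<^sup>* G2 G"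
      and cons2: "consistent G2 S \<rho>2" and lv2: "\<forall>l\<in>leaves G. \<rho>2 l = \<phi> l"
      using dl2 unfolding dl_reconciliation_def is_extension_def by blast+
    have wG2: "wtree G2" by (rule is_tree_wtree[OF tG2])
    have rf2: "troot G = troot G2 \<and> tV G \<subseteq> tV G2 \<and> agree G G2 \<and> sepc G2 (tV G) \<and> wtree G"
      by (rule reach_fwd[OF rch2 wG2])
    then have rt2: "troot G = troot G2" and sub2: "tV G \<subseteq> tV G2" and ag2: "agree G G2"
      and sp2: "sepc G2 (tV G)" by blast+
    obtain c1 c2 where cc2: "tpar G2 c1 = Some x" "tpar G2 c2 = Some x" "c1 \<noteq> c2"
      using split_children[OF wG2 wG sub2 ag2 sp2 pa pb ab(1)] by blast
    have xV2: "x \<in> tV G2" using xG sub2 by blast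
    have xnr2: "x \<noteq> troot G2" using xnr rt2 by simp
    have card2: "card (children G2 x) = 2" by (rule is_tree_card2[OF tG2 xV2 xnr2 cc2(1)])
    have "is_dup G2 S \<rho>2 x \<or> is_spec G2 S \<rho>2 x" using cons2 xV2 card2 unfolding consistent_def by blast
    then show "x \<in> Sigma G2 S \<rho>2"
    proof
      assume "is_spec G2 S \<rho>2 x"
      then show ?thesis using xV2 unfolding Sigma_def by blast
    next
      assume dup: "is_dup G2 S \<rho>2 x"
      have ra: "tleq S (\<rho>2 a) t1" using lca_a eq2 aG by simp
      have rb: "tleq S (\<rho>2 b) t2" using lca_b eq2 bG by simp
      have rx: "\<rho>2 x = s" using eq2 xG part2 s_def by simp
      have False
        by (rule dup_impossible[OF tS tG tG2 rch2 cons2 lv2 eq2 min xG xnr pa pb ab(1) ab(2)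
              pt1 pt2 t12 tt ra rb rx dup])
      then show ?thesis by blast
    qed
  qed
  show ?thesis using part1 part2 by blast
qed


end
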